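(* Let $z_1,\dots,z_n$ be i.i.d. random vectors in $\mathbb R^d$ with distribution $Q_z$, and let $\varepsilon_1,\dots,\varepsilon_n$ be a Rademacher sequence (i.i.d., $\pm1$ with probability $1/2$ each) independent of $\{z_i\}$. Let $\tilde R,\tilde K>0$ and let $\mathcal G(\tilde R,\tilde K)$ be a (countable) class of functions $g$ on $\mathbb R^d$ with $\|g\|_\infty\le\tilde K$ and $\|g\|\le\tilde R$ for all $g$ in the class. Let $G:[0,\infty)\to[0,\infty)$ be a continuous, strictly increasing, strictly convex bijection, and let $H(v)=\sup_{u\ge0}\{vu-G(u)\}$ be its convex conjugate. Put $\tilde R_n^2=\sup_{g\in\mathcal G(\tilde R,\tilde K)}\|g\|_n^2$, and suppose $$\mathbb E\sup_{g\in\mathcal G(\tilde R,\tilde K)}\Big|\frac1n\sum_{i=1}^n g(z_i)\varepsilon_i\Big|\le \frac{\mathbb E\, G^{-1}(\tilde R_n^2)}{\sqrt n}.$$ Then, whenever $\tilde R^2\ge H(16\tilde K/\sqrt n)/2$, $$\mathbb E\,G^{-1}(\tilde R_n^2)\le G^{-1}(4\tilde R^2)\quad\text{and}\quad \mathbb E\sup_{g\in\mathcal G(\tilde R,\tilde K)}\big|\|g\|_n^2-\|g\|^2\big|\le \frac{8\tilde K\,G^{-1}(4\tilde R^2)}{\sqrt n}.$$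
   Context: $\|g\|^2=\mathbb E g(z_1)^2$ (the $L_2(Q_z)$ norm), $\|g\|_n^2=\frac1n\sum_{i=1}^n g(z_i)^2$, $\|g\|_\infty=\sup|g|$. *)

theory Defs
  imports "HOL-Probability.Probability"
begin

definition strict_convex_on :: "real set \<Rightarrow> (real \<Rightarrow> real) \<Rightarrow> bool" where
  "strict_convex_on S f \<longleftrightarrow>
     (\<forall>x\<in>S. \<forall>y\<in>S. \<forall>t. x \<noteq> y \<and> 0 < t \<and> t < 1 \<longrightarrow>
        f ((1 - t) * x + t * y) < (1 - t) * f x + t * f y)"

definition rademacher :: "real measure" where
  "rademacher = distr (measure_pmf (pmf_of_set {-1, 1})) borel (\<lambda>x. x)"

definition conj_fun :: "(real \<Rightarrow> real) \<Rightarrow> real \<Rightarrow> ereal" where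
  "conj_fun G v = (SUP u\<in>{0..}. ereal (v * u - G u))"

definition L2sq :: "'x measure \<Rightarrow> ('x \<Rightarrow> real) \<Rightarrow> real" where
  "L2sq Q g = (\<integral>x. (g x)^2 \<partial>Q)"

definition empsq :: "nat \<Rightarrow> (nat \<Rightarrow> 'x) \<Rightarrow> ('x \<Rightarrow> real) \<Rightarrow> real" where
  "empsq n zs g = (1 / real n) * (\<Sum>i<n. (g (zs i))^2)"

end

theory Submission
  imports Defs
begin

lemma rad_prob: "prob_space rademacher"
  unfolding rademacher_def by (rule prob_space.prob_space_distr) (auto intro: prob_space_measure_pmf)

lemma sets_rad[simp,measurable_cong]: "sets rademacher = sets borel"
  unfolding rademacher_def by simp

lemma space_rad[simp]: "space rademacher = UNIV"
  unfolding rademacher_def by simp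

lemma integral_rad:
  fixes f :: "real \<Rightarrow> real"
  assumes [measurable]: "f \<in> borel_measurable borel"
  shows "(\<integral>x. f x \<partial>rademacher) = (f 1 + f (-1)) / 2"
  unfolding rademacher_def
  by (subst integral_distr) (auto simp: integral_pmf_of_set)

lemma emeasure_rad:
  assumes "C \<in> sets borel"
  shows "emeasure rademacher C = ennreal (card ({-1,1::real} \<inter> C) / 2)"
  unfolding rademacher_def using assms
  by (subst emeasure_distr) (auto simp: emeasure_pmf_of_set)

lemma AE_rad: "AE x in rademacher. x \<in> {-1,1}"
proof -
  have "emeasure rademacher (UNIV - {-1,1}) = 0"
    by (subst emeasure_rad) auto
  then show ?thesis
    by (intro AE_I[of _ _ "UNIV - {-1,1}"]) auto
qed


lemma PiM_zip:
  fixes A :: "'a measure" and B :: "'b measure"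
  assumes I: "finite I" and pA: "prob_space A" and pB: "prob_space B"
  shows "distr (PiM I (\<lambda>_. A) \<Otimes>\<^sub>M PiM I (\<lambda>_. B)) (PiM I (\<lambda>_. A \<Otimes>\<^sub>M B))
           (\<lambda>p. \<lambda>i\<in>I. (fst p i, snd p i)) = PiM I (\<lambda>_. A \<Otimes>\<^sub>M B)"
proof -
  interpret A: prob_space A by fact
  interpret B: prob_space B by fact
  interpret AB: pair_prob_space A B by unfold_locales
  interpret PA: product_prob_space "\<lambda>_. A" I by unfold_locales
  interpret PB: product_prob_space "\<lambda>_. B" I by unfold_locales
  interpret PAB: product_sigma_finite "\<lambda>_. A \<Otimes>\<^sub>M B" by unfold_locales
  interpret PAA: prob_space "PiM I (\<lambda>_. A)" by (rule prob_space_PiM) (auto intro: pA)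
  interpret PBB: prob_space "PiM I (\<lambda>_. B)" by (rule prob_space_PiM) (auto intro: pB)
  interpret PP: pair_prob_space "PiM I (\<lambda>_. A)" "PiM I (\<lambda>_. B)" by unfold_locales
  have meas[measurable]: "(\<lambda>p. \<lambda>i\<in>I. (fst p i, snd p i)) \<in> measurable (PiM I (\<lambda>_. A) \<Otimes>\<^sub>M PiM I (\<lambda>_. B)) (PiM I (\<lambda>_. A \<Otimes>\<^sub>M B))"
    by (rule measurable_restrict) measurable
  show ?thesis
  proof (rule PAB.PiM_eqI[OF I])
    show "sets (distr (PiM I (\<lambda>_. A) \<Otimes>\<^sub>M PiM I (\<lambda>_. B)) (PiM I (\<lambda>_. A \<Otimes>\<^sub>M B))
           (\<lambda>p. \<lambda>i\<in>I. (fst p i, snd p i))) = sets (PiM I (\<lambda>_. A \<Otimes>\<^sub>M B))" by simp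
    fix C assume C: "\<And>i. i \<in> I \<Longrightarrow> C i \<in> sets (A \<Otimes>\<^sub>M B)"
    have Csub: "C i \<subseteq> space A \<times> space B" if "i \<in> I" for i
      using sets.sets_into_space[OF C[OF that]] by (simp add: space_pair_measure)
    have CPi[measurable]: "Pi\<^sub>E I C \<in> sets (PiM I (\<lambda>_. A \<Otimes>\<^sub>M B))"
      using C by (intro sets_PiM_I_finite I) auto
    define f where "f i a = emeasure B (Pair a -` C i)" for i a
    have fm[measurable]: "f i \<in> borel_measurable A" if "i \<in> I" for i
      unfolding f_def using C[OF that] by (rule B.measurable_emeasure_Pair)
    have slice: "Pair x -` ((\<lambda>p. \<lambda>i\<in>I. (fst p i, snd p i)) -` Pi\<^sub>E I C \<inter> space (PiM I (\<lambda>_. A) \<Otimes>\<^sub>M PiM I (\<lambda>_. B)))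
        = Pi\<^sub>E I (\<lambda>i. Pair (x i) -` C i)" if x: "x \<in> space (PiM I (\<lambda>_. A))" for x
      using x Csub by (auto simp: space_pair_measure space_PiM PiE_iff)
    have "emeasure (distr (PiM I (\<lambda>_. A) \<Otimes>\<^sub>M PiM I (\<lambda>_. B)) (PiM I (\<lambda>_. A \<Otimes>\<^sub>M B))
           (\<lambda>p. \<lambda>i\<in>I. (fst p i, snd p i))) (Pi\<^sub>E I C)
        = emeasure (PiM I (\<lambda>_. A) \<Otimes>\<^sub>M PiM I (\<lambda>_. B)) ((\<lambda>p. \<lambda>i\<in>I. (fst p i, snd p i)) -` Pi\<^sub>E I C \<inter> space (PiM I (\<lambda>_. A) \<Otimes>\<^sub>M PiM I (\<lambda>_. B)))"
      by (rule emeasure_distr) (auto)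
    also have "\<dots> = (\<integral>\<^sup>+ x. emeasure (PiM I (\<lambda>_. B)) (Pair x -` ((\<lambda>p. \<lambda>i\<in>I. (fst p i, snd p i)) -` Pi\<^sub>E I C \<inter> space (PiM I (\<lambda>_. A) \<Otimes>\<^sub>M PiM I (\<lambda>_. B)))) \<partial>PiM I (\<lambda>_. A))"
      using measurable_sets[OF meas CPi] by (rule sigma_finite_measure.emeasure_pair_measure_alt[rotated]) unfold_locales
    also have "\<dots> = (\<integral>\<^sup>+ x. (\<Prod>i\<in>I. f i (x i)) \<partial>PiM I (\<lambda>_. A))"
    proof (rule nn_integral_cong)
      fix x assume x: "x \<in> space (PiM I (\<lambda>_. A))"
      have "Pair (x i) -` C i \<in> sets B" if "i \<in> I" for i
        using x that C by (intro sets_Pair1) (auto simp: space_PiM)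
      then show "emeasure (PiM I (\<lambda>_. B)) (Pair x -` ((\<lambda>p. \<lambda>i\<in>I. (fst p i, snd p i)) -` Pi\<^sub>E I C \<inter> space (PiM I (\<lambda>_. A) \<Otimes>\<^sub>M PiM I (\<lambda>_. B))))
         = (\<Prod>i\<in>I. f i (x i))"
        unfolding slice[OF x] f_def by (simp add: PB.emeasure_PiM I)
    qed
    also have "\<dots> = (\<Prod>i\<in>I. integral\<^sup>N A (f i))"
      by (rule PA.product_nn_integral_prod[OF I fm])
    also have "\<dots> = (\<Prod>i\<in>I. emeasure (A \<Otimes>\<^sub>M B) (C i))"
      by (rule prod.cong) (auto simp: f_def[abs_def] sigma_finite_measure.emeasure_pair_measure_alt[OF B.sigma_finite_measure_axioms] C)
    finally show "emeasure (distr (PiM I (\<lambda>_. A) \<Otimes>\<^sub>M PiM I (\<lambda>_. B)) (PiM I (\<lambda>_. A \<Otimes>\<^sub>M B))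
           (\<lambda>p. \<lambda>i\<in>I. (fst p i, snd p i))) (Pi\<^sub>E I C) = (\<Prod>i\<in>I. emeasure (A \<Otimes>\<^sub>M B) (C i))" .
  qed
qed


lemma PiM_coord_map:
  fixes N :: "'a measure"
  assumes I: "finite I" and pN: "prob_space N"
    and fm[measurable]: "\<And>i. i \<in> I \<Longrightarrow> f i \<in> measurable N N"
    and fd: "\<And>i. i \<in> I \<Longrightarrow> distr N N (f i) = N"
  shows "distr (PiM I (\<lambda>_. N)) (PiM I (\<lambda>_. N)) (\<lambda>\<omega>. \<lambda>i\<in>I. f i (\<omega> i)) = PiM I (\<lambda>_. N)"
proof -
  interpret N: prob_space N by fact
  interpret PN: product_prob_space "\<lambda>_. N" I by unfold_locales
  have meas[measurable]: "(\<lambda>\<omega>. \<lambda>i\<in>I. f i (\<omega> i)) \<in> measurable (PiM I (\<lambda>_. N)) (PiM I (\<lambda>_. N))"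
    proof (rule measurable_restrict)
    fix i assume i: "i \<in> I"
    show "(\<lambda>\<omega>. f i (\<omega> i)) \<in> measurable (PiM I (\<lambda>_. N)) N"
      using i fm[OF i] by measurable
  qed
  show ?thesis
  proof (rule PN.PiM_eqI[OF I])
    fix C assume C: "\<And>i. i \<in> I \<Longrightarrow> C i \<in> sets N"
    have CPi: "Pi\<^sub>E I C \<in> sets (PiM I (\<lambda>_. N))"
      using C by (intro sets_PiM_I_finite I) auto
    have pre: "(\<lambda>\<omega>. \<lambda>i\<in>I. f i (\<omega> i)) -` Pi\<^sub>E I C \<inter> space (PiM I (\<lambda>_. N))
        = Pi\<^sub>E I (\<lambda>i. f i -` C i \<inter> space N)"
      by (auto simp: space_PiM PiE_iff)
    have "emeasure (distr (PiM I (\<lambda>_. N)) (PiM I (\<lambda>_. N)) (\<lambda>\<omega>. \<lambda>i\<in>I. f i (\<omega> i))) (Pi\<^sub>E I C)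
      = emeasure (PiM I (\<lambda>_. N)) (Pi\<^sub>E I (\<lambda>i. f i -` C i \<inter> space N))"
      using CPi by (subst emeasure_distr) (auto simp: pre)
    also have "\<dots> = (\<Prod>i\<in>I. emeasure N (f i -` C i \<inter> space N))"
      using C by (intro PN.emeasure_PiM I) (auto intro: measurable_sets[OF fm])
    also have "\<dots> = (\<Prod>i\<in>I. emeasure N (C i))"
    proof (rule prod.cong[OF refl])
      fix i assume i: "i \<in> I"
      have "emeasure N (f i -` C i \<inter> space N) = emeasure (distr N N (f i)) (C i)"
        using C[OF i] fm[OF i] by (simp add: emeasure_distr)
      then show "emeasure N (f i -` C i \<inter> space N) = emeasure N (C i)"
        using fd[OF i] by simp
    qed
    finally show "emeasure (distr (PiM I (\<lambda>_. N)) (PiM I (\<lambda>_. N)) (\<lambda>\<omega>. \<lambda>i\<in>I. f i (\<omega> i))) (Pi\<^sub>E I C) = (\<Prod>i\<in>I. emeasure N (C i))" .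
  qed simp
qed


definition Sg :: "'i set \<Rightarrow> ('i \<Rightarrow> real) set" where
  "Sg I = PiE I (\<lambda>_. {-1, 1})"

lemma Sg_finite: "finite I \<Longrightarrow> finite (Sg I)"
  unfolding Sg_def by (intro finite_PiE) auto

lemma Sg_ne: "Sg I \<noteq> {}"
  unfolding Sg_def by (simp add: PiE_eq_empty_iff)

lemma card_Sg: "finite I \<Longrightarrow> card (Sg I) = 2 ^ card I"
  unfolding Sg_def by (simp add: card_PiE numeral_2_eq_2)

lemma PiM_rad_eq:
  assumes I: "finite I"
  shows "PiM I (\<lambda>_. rademacher) = distr (measure_pmf (pmf_of_set (Sg I))) (PiM I (\<lambda>_. rademacher)) (\<lambda>s. restrict s I)"
proof -
  interpret R: prob_space rademacher by (rule rad_prob)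
  interpret PR: product_prob_space "\<lambda>_. rademacher" I by unfold_locales
  have [simp]: "finite (Sg I)" "Sg I \<noteq> {}" using Sg_finite[OF I] Sg_ne by auto
  have meas: "(\<lambda>s. restrict s I) \<in> measurable (measure_pmf (pmf_of_set (Sg I))) (PiM I (\<lambda>_. rademacher))"
    by (simp add: space_PiM)
  show ?thesis
  proof (rule PR.PiM_eqI[OF I, symmetric])
    fix C assume C: "\<And>i. i \<in> I \<Longrightarrow> C i \<in> sets rademacher"
    have CPi: "Pi\<^sub>E I C \<in> sets (PiM I (\<lambda>_. rademacher))"
      using C by (intro sets_PiM_I_finite I) auto
    have eq: "Sg I \<inter> ((\<lambda>s. restrict s I) -` Pi\<^sub>E I C) = PiE I (\<lambda>i. {-1,1} \<inter> C i)"
      by (auto simp: Sg_def PiE_iff)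
    have "emeasure (distr (measure_pmf (pmf_of_set (Sg I))) (PiM I (\<lambda>_. rademacher)) (\<lambda>s. restrict s I)) (Pi\<^sub>E I C)
       = emeasure (measure_pmf (pmf_of_set (Sg I))) ((\<lambda>s. restrict s I) -` Pi\<^sub>E I C)"
      using CPi meas by (subst emeasure_distr) auto
    also have "\<dots> = ennreal (real (card (PiE I (\<lambda>i. {-1,1::real} \<inter> C i))) / real (card (Sg I)))"
      by (subst emeasure_pmf_of_set) (auto simp: eq)
    also have "\<dots> = ennreal ((\<Prod>i\<in>I. real (card ({-1,1::real} \<inter> C i))) / 2 ^ card I)"
      using I by (simp add: card_PiE card_Sg)
    also have "\<dots> = ennreal (\<Prod>i\<in>I. real (card ({-1,1::real} \<inter> C i)) / 2)"
      using I by (simp add: prod_dividef)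
    also have "\<dots> = (\<Prod>i\<in>I. ennreal (real (card ({-1,1::real} \<inter> C i)) / 2))"
      by (rule prod_ennreal[symmetric]) auto
    also have "\<dots> = (\<Prod>i\<in>I. emeasure rademacher (C i))"
      using C by (intro prod.cong refl) (simp add: emeasure_rad)
    finally show "emeasure (distr (measure_pmf (pmf_of_set (Sg I))) (PiM I (\<lambda>_. rademacher)) (\<lambda>s. restrict s I)) (Pi\<^sub>E I C)
       = (\<Prod>i\<in>I. emeasure rademacher (C i))" .
  qed simp
qed

lemma integral_PiM_rad:
  fixes F :: "('i \<Rightarrow> real) \<Rightarrow> real"
  assumes I: "finite I" and Fm: "F \<in> borel_measurable (PiM I (\<lambda>_. rademacher))"
  shows "(\<integral>s. F s \<partial>PiM I (\<lambda>_. rademacher)) = (\<Sum>s\<in>Sg I. F s) / 2 ^ card I"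
proof -
  have [simp]: "finite (Sg I)" "Sg I \<noteq> {}" using Sg_finite[OF I] Sg_ne by auto
  have meas: "(\<lambda>s. restrict s I) \<in> measurable (measure_pmf (pmf_of_set (Sg I))) (PiM I (\<lambda>_. rademacher))"
    by (simp add: space_PiM)
  have "(\<integral>s. F s \<partial>PiM I (\<lambda>_. rademacher)) = (\<integral>s. F (restrict s I) \<partial>measure_pmf (pmf_of_set (Sg I)))"
    by (subst PiM_rad_eq[OF I]) (rule integral_distr[OF meas Fm])
  also have "\<dots> = (\<Sum>s\<in>Sg I. F (restrict s I)) / real (card (Sg I))"
    by (rule integral_pmf_of_set) auto
  also have "(\<Sum>s\<in>Sg I. F (restrict s I)) = (\<Sum>s\<in>Sg I. F s)"
    by (intro sum.cong refl) (auto simp: Sg_def PiE_iff extensional_restrict)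
  finally show ?thesis using I by (simp add: card_Sg)
qed


lemma sum_Sg_insert:
  assumes "finite I" "j \<notin> I"
  shows "(\<Sum>s\<in>Sg (insert j I). F s) = (\<Sum>g\<in>Sg I. F (g(j := -1)) + F (g(j := 1)))"
proof -
  have "Sg (insert j I) = (\<lambda>(y, g). g(j := y)) ` ({-1,1} \<times> Sg I)"
    unfolding Sg_def by (rule PiE_insert_eq)
  then have "(\<Sum>s\<in>Sg (insert j I). F s) = (\<Sum>p\<in>{-1,1::real} \<times> Sg I. F ((\<lambda>(y, g). g(j := y)) p))"
    using inj_combinator[OF assms(2), of "\<lambda>_. {-1,1::real}"]
    by (simp add: sum.reindex Sg_def)
  also have "\<dots> = (\<Sum>y\<in>{-1,1::real}. \<Sum>g\<in>Sg I. F (g(j := y)))"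
    by (subst sum.cartesian_product') simp
  also have "\<dots> = (\<Sum>g\<in>Sg I. F (g(j := -1)) + F (g(j := 1)))"
    by (simp add: sum.distrib)
  finally show ?thesis .
qed

lemma contr1:
  fixes B p q :: "'t \<Rightarrow> real"
  assumes T: "T \<noteq> {}"
    and bB: "\<And>t. t \<in> T \<Longrightarrow> \<bar>B t\<bar> \<le> c" and bq: "\<And>t. t \<in> T \<Longrightarrow> \<bar>q t\<bar> \<le> c"
    and bp: "\<And>t. t \<in> T \<Longrightarrow> \<bar>p t\<bar> \<le> c"
    and lip: "\<And>t t'. t \<in> T \<Longrightarrow> t' \<in> T \<Longrightarrow> \<bar>p t - p t'\<bar> \<le> \<bar>q t - q t'\<bar>"
  shows "(SUP t\<in>T. B t + p t) + (SUP t\<in>T. B t - p t) \<le> (SUP t\<in>T. B t + q t) + (SUP t\<in>T. B t - q t)"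
proof -
  have b1: "bdd_above ((\<lambda>t. B t + q t) ` T)" "bdd_above ((\<lambda>t. B t - q t) ` T)"
    using bB bq by (auto intro!: bdd_aboveI[of _ "2*c"] simp: abs_le_iff; smt (verit, best) bB bq abs_le_iff)+
  have key: "(B t + p t) + (B t' - p t') \<le> (SUP t\<in>T. B t + q t) + (SUP t\<in>T. B t - q t)"
    if t: "t \<in> T" "t' \<in> T" for t t'
  proof -
    have u1: "B t + q t \<le> (SUP t\<in>T. B t + q t)" "B t' + q t' \<le> (SUP t\<in>T. B t + q t)"
      using t b1 by (auto intro: cSUP_upper)
    have u2: "B t - q t \<le> (SUP t\<in>T. B t - q t)" "B t' - q t' \<le> (SUP t\<in>T. B t - q t)"
      using t b1 by (auto intro: cSUP_upper)
    have "p t - p t' \<le> \<bar>q t - q t'\<bar>" using lip[OF t] by linarith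
    then show ?thesis using u1 u2 by (cases "q t \<ge> q t'") (auto simp: abs_if)
  qed
  have "(SUP t\<in>T. B t + p t) \<le> (SUP t\<in>T. B t + q t) + (SUP t\<in>T. B t - q t) - (B t' - p t')" if "t' \<in> T" for t'
    using T key that by (intro cSUP_least) (auto simp: algebra_simps)
  then have "(B t' - p t') \<le> (SUP t\<in>T. B t + q t) + (SUP t\<in>T. B t - q t) - (SUP t\<in>T. B t + p t)" if "t' \<in> T" for t'
    using that by force
  then have "(SUP t\<in>T. B t - p t) \<le> (SUP t\<in>T. B t + q t) + (SUP t\<in>T. B t - q t) - (SUP t\<in>T. B t + p t)"
    using T by (intro cSUP_least) auto
  then show ?thesis by linarith
qed


lemma Sg_abs: "g \<in> Sg I \<Longrightarrow> i \<in> I \<Longrightarrow> \<bar>g i\<bar> = 1"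
  unfolding Sg_def by (auto simp: PiE_iff)

lemma sum_Sg_bound:
  assumes "g \<in> Sg I" "\<And>i. i \<in> I \<Longrightarrow> \<bar>v i\<bar> \<le> c"
  shows "\<bar>\<Sum>i\<in>I. g i * v i\<bar> \<le> real (card I) * c"
proof -
  have "\<bar>\<Sum>i\<in>I. g i * v i\<bar> \<le> (\<Sum>i\<in>I. \<bar>g i * v i\<bar>)" by (rule sum_abs)
  also have "\<dots> \<le> (\<Sum>i\<in>I. c)"
    using assms by (intro sum_mono) (simp add: abs_mult Sg_abs)
  finally show ?thesis by simp
qed

lemma sum_upd_split:
  assumes "finite I" "j \<notin> I"
  shows "(\<Sum>i\<in>insert j I. (g(j := y)) i * v i) = y * v j + (\<Sum>i\<in>I. g i * v i)"
proof -
  have "(\<Sum>i\<in>I. (g(j := y)) i * v i) = (\<Sum>i\<in>I. g i * v i)"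
    using assms by (intro sum.cong) auto
  then show ?thesis using assms by simp
qed

lemma contr_sum:
  fixes \<psi> u :: "'t \<Rightarrow> 'i \<Rightarrow> real"
  assumes I: "finite I" and T: "T \<noteq> {}"
    and bnd: "\<And>t i. t \<in> T \<Longrightarrow> i \<in> I \<Longrightarrow> \<bar>\<psi> t i\<bar> \<le> c \<and> \<bar>u t i\<bar> \<le> c"
    and lip: "\<And>t t' i. t \<in> T \<Longrightarrow> t' \<in> T \<Longrightarrow> i \<in> I \<Longrightarrow> \<bar>\<psi> t i - \<psi> t' i\<bar> \<le> \<bar>u t i - u t' i\<bar>"
    and bA: "\<And>t. t \<in> T \<Longrightarrow> \<bar>A t\<bar> \<le> a"
  shows "(\<Sum>s\<in>Sg I. (SUP t\<in>T. A t + (\<Sum>i\<in>I. s i * \<psi> t i)))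
       \<le> (\<Sum>s\<in>Sg I. (SUP t\<in>T. A t + (\<Sum>i\<in>I. s i * u t i)))"
  using I bnd lip bA
proof (induction I arbitrary: A a rule: finite_induct)
  case empty
  then show ?case by simp
next
  case (insert j I)
  have bnd': "\<And>t i. t \<in> T \<Longrightarrow> i \<in> I \<Longrightarrow> \<bar>\<psi> t i\<bar> \<le> c \<and> \<bar>u t i\<bar> \<le> c"
    and lip': "\<And>t t' i. t \<in> T \<Longrightarrow> t' \<in> T \<Longrightarrow> i \<in> I \<Longrightarrow> \<bar>\<psi> t i - \<psi> t' i\<bar> \<le> \<bar>u t i - u t' i\<bar>"
    using insert.prems by auto
  have bj: "\<And>t. t \<in> T \<Longrightarrow> \<bar>\<psi> t j\<bar> \<le> c \<and> \<bar>u t j\<bar> \<le> c" using insert.prems by auto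
  have IH: "(\<Sum>s\<in>Sg I. (SUP t\<in>T. (A t + y * \<psi> t j) + (\<Sum>i\<in>I. s i * \<psi> t i)))
       \<le> (\<Sum>s\<in>Sg I. (SUP t\<in>T. (A t + y * \<psi> t j) + (\<Sum>i\<in>I. s i * u t i)))" if y: "\<bar>y\<bar> = 1" for y
  proof (rule insert.IH[OF bnd' lip'])
    fix t assume t: "t \<in> T"
    have "\<bar>y * \<psi> t j\<bar> \<le> c" using y bj[OF t] by (simp add: abs_mult)
    then show "\<bar>A t + y * \<psi> t j\<bar> \<le> a + c" using insert.prems(3)[OF t] by linarith
  qed auto
  have C1: "(SUP t\<in>T. (A t + (\<Sum>i\<in>I. g i * u t i)) + \<psi> t j) + (SUP t\<in>T. (A t + (\<Sum>i\<in>I. g i * u t i)) - \<psi> t j)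
     \<le> (SUP t\<in>T. (A t + (\<Sum>i\<in>I. g i * u t i)) + u t j) + (SUP t\<in>T. (A t + (\<Sum>i\<in>I. g i * u t i)) - u t j)"
    if g: "g \<in> Sg I" for g
  proof (rule contr1[OF T, where c = "a + real (card I) * c + c"])
    fix t assume t: "t \<in> T"
    have "\<bar>\<Sum>i\<in>I. g i * u t i\<bar> \<le> real (card I) * c"
      using g bnd'[OF t] by (intro sum_Sg_bound) auto
    moreover have "0 \<le> c" using bj[OF t] by linarith
    moreover have "real (card I) * c \<ge> 0" using \<open>0 \<le> c\<close> by simp
    ultimately show "\<bar>A t + (\<Sum>i\<in>I. g i * u t i)\<bar> \<le> a + real (card I) * c + c"
      "\<bar>u t j\<bar> \<le> a + real (card I) * c + c" "\<bar>\<psi> t j\<bar> \<le> a + real (card I) * c + c"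
      using insert.prems(3)[OF t] bj[OF t] by (auto simp: abs_le_iff)
  next
    fix t t' assume "t \<in> T" "t' \<in> T"
    then show "\<bar>\<psi> t j - \<psi> t' j\<bar> \<le> \<bar>u t j - u t' j\<bar>" using insert.prems(2) by auto
  qed
  have "(\<Sum>s\<in>Sg (insert j I). (SUP t\<in>T. A t + (\<Sum>i\<in>insert j I. s i * \<psi> t i)))
      = (\<Sum>g\<in>Sg I. (SUP t\<in>T. (A t + (-1) * \<psi> t j) + (\<Sum>i\<in>I. g i * \<psi> t i)))
      + (\<Sum>g\<in>Sg I. (SUP t\<in>T. (A t + 1 * \<psi> t j) + (\<Sum>i\<in>I. g i * \<psi> t i)))"
    unfolding sum_Sg_insert[OF insert.hyps] sum_upd_split[OF insert.hyps] by (simp add: sum.distrib algebra_simps)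
  also have "\<dots> \<le> (\<Sum>g\<in>Sg I. (SUP t\<in>T. (A t + (-1) * \<psi> t j) + (\<Sum>i\<in>I. g i * u t i)))
      + (\<Sum>g\<in>Sg I. (SUP t\<in>T. (A t + 1 * \<psi> t j) + (\<Sum>i\<in>I. g i * u t i)))"
    by (intro add_mono IH) auto
  also have "\<dots> = (\<Sum>g\<in>Sg I. (SUP t\<in>T. (A t + (\<Sum>i\<in>I. g i * u t i)) + \<psi> t j) + (SUP t\<in>T. (A t + (\<Sum>i\<in>I. g i * u t i)) - \<psi> t j))"
    by (simp add: sum.distrib algebra_simps)
  also have "\<dots> \<le> (\<Sum>g\<in>Sg I. (SUP t\<in>T. (A t + (\<Sum>i\<in>I. g i * u t i)) + u t j) + (SUP t\<in>T. (A t + (\<Sum>i\<in>I. g i * u t i)) - u t j))"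
    by (intro sum_mono C1)
  also have "\<dots> = (\<Sum>s\<in>Sg (insert j I). (SUP t\<in>T. A t + (\<Sum>i\<in>insert j I. s i * u t i)))"
    unfolding sum_Sg_insert[OF insert.hyps] sum_upd_split[OF insert.hyps] by (simp add: sum.distrib algebra_simps)
  finally show ?case .
qed


lemma contr_abs:
  fixes \<psi> u :: "'t \<Rightarrow> 'i \<Rightarrow> real"
  assumes I: "finite I" and T: "T \<noteq> {}" and c0: "0 \<le> c"
    and bnd: "\<And>t i. t \<in> T \<Longrightarrow> i \<in> I \<Longrightarrow> \<bar>\<psi> t i\<bar> \<le> c \<and> \<bar>u t i\<bar> \<le> c"
    and lip: "\<And>t t' i. t \<in> T \<Longrightarrow> t' \<in> T \<Longrightarrow> i \<in> I \<Longrightarrow> \<bar>\<psi> t i - \<psi> t' i\<bar> \<le> \<bar>u t i - u t' i\<bar>"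
    and lip0: "\<And>t i. t \<in> T \<Longrightarrow> i \<in> I \<Longrightarrow> \<bar>\<psi> t i\<bar> \<le> \<bar>u t i\<bar>"
  shows "(\<Sum>s\<in>Sg I. (SUP t\<in>T. \<bar>\<Sum>i\<in>I. s i * \<psi> t i\<bar>))
       \<le> 2 * (\<Sum>s\<in>Sg I. (SUP t\<in>T. \<bar>\<Sum>i\<in>I. s i * u t i\<bar>))"
proof -
  define T' where "T' = insert None (Some ` T)"
  define \<psi>' where "\<psi>' = (\<lambda>t i. case t of None \<Rightarrow> 0 | Some t \<Rightarrow> \<psi> t i)"
  define u' where "u' = (\<lambda>t i. case t of None \<Rightarrow> 0 | Some t \<Rightarrow> u t i)"
  define m\<psi>' where "m\<psi>' = (\<lambda>t i. - \<psi>' t i)"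
  have T'ne: "T' \<noteq> {}" by (simp add: T'_def)
  have bnd': "\<And>t i. t \<in> T' \<Longrightarrow> i \<in> I \<Longrightarrow> \<bar>\<psi>' t i\<bar> \<le> c \<and> \<bar>u' t i\<bar> \<le> c"
    using bnd c0 by (auto simp: T'_def \<psi>'_def u'_def)
  have bndm: "\<And>t i. t \<in> T' \<Longrightarrow> i \<in> I \<Longrightarrow> \<bar>m\<psi>' t i\<bar> \<le> c \<and> \<bar>u' t i\<bar> \<le> c"
    using bnd' by (simp add: m\<psi>'_def)
  have lip': "\<And>t t' i. t \<in> T' \<Longrightarrow> t' \<in> T' \<Longrightarrow> i \<in> I \<Longrightarrow> \<bar>\<psi>' t i - \<psi>' t' i\<bar> \<le> \<bar>u' t i - u' t' i\<bar>"
    using lip lip0 by (auto simp: T'_def \<psi>'_def u'_def abs_minus_commute)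
  have lipm: "\<And>t t' i. t \<in> T' \<Longrightarrow> t' \<in> T' \<Longrightarrow> i \<in> I \<Longrightarrow> \<bar>m\<psi>' t i - m\<psi>' t' i\<bar> \<le> \<bar>u' t i - u' t' i\<bar>"
    using lip' by (simp add: m\<psi>'_def abs_minus_commute)
  have A1: "(\<Sum>s\<in>Sg I. (SUP t\<in>T'. 0 + (\<Sum>i\<in>I. s i * \<psi>' t i))) \<le> (\<Sum>s\<in>Sg I. (SUP t\<in>T'. 0 + (\<Sum>i\<in>I. s i * u' t i)))"
    by (rule contr_sum[OF I T'ne bnd' lip', where A="\<lambda>_. 0" and a=0]) auto
  have A2: "(\<Sum>s\<in>Sg I. (SUP t\<in>T'. 0 + (\<Sum>i\<in>I. s i * m\<psi>' t i))) \<le> (\<Sum>s\<in>Sg I. (SUP t\<in>T'. 0 + (\<Sum>i\<in>I. s i * u' t i)))"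
    by (rule contr_sum[OF I T'ne bndm lipm, where A="\<lambda>_. 0" and a=0]) auto
  have bddw: "bdd_above ((\<lambda>t. (\<Sum>i\<in>I. s i * w t i)) ` T')"
    if s: "s \<in> Sg I" and w: "\<And>t i. t \<in> T' \<Longrightarrow> i \<in> I \<Longrightarrow> \<bar>w t i\<bar> \<le> c" for s w
    using sum_Sg_bound[OF s w] by (intro bdd_aboveI[of _ "real (card I) * c"]) (auto simp: abs_le_iff)
  have bddu: "bdd_above ((\<lambda>t. \<bar>\<Sum>i\<in>I. s i * u t i\<bar>) ` T)" if s: "s \<in> Sg I" for s
    using sum_Sg_bound[OF s, of "u t" c for t] bnd by (intro bdd_aboveI[of _ "real (card I) * c"]) auto
  have P1: "(SUP t\<in>T. \<bar>\<Sum>i\<in>I. s i * \<psi> t i\<bar>)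
      \<le> (SUP t\<in>T'. 0 + (\<Sum>i\<in>I. s i * \<psi>' t i)) + (SUP t\<in>T'. 0 + (\<Sum>i\<in>I. s i * m\<psi>' t i))"
    if s: "s \<in> Sg I" for s
  proof (rule cSUP_least[OF T])
    fix t assume t: "t \<in> T"
    have b1: "bdd_above ((\<lambda>t. 0 + (\<Sum>i\<in>I. s i * \<psi>' t i)) ` T')"
      using bddw[OF s, of \<psi>'] bnd' by simp
    have b2: "bdd_above ((\<lambda>t. 0 + (\<Sum>i\<in>I. s i * m\<psi>' t i)) ` T')"
      using bddw[OF s, of m\<psi>'] bndm by simp
    have "Some t \<in> T'" "None \<in> T'" using t by (auto simp: T'_def)
    then have "0 + (\<Sum>i\<in>I. s i * \<psi>' (Some t) i) \<le> (SUP t\<in>T'. 0 + (\<Sum>i\<in>I. s i * \<psi>' t i))"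
      "0 + (\<Sum>i\<in>I. s i * \<psi>' None i) \<le> (SUP t\<in>T'. 0 + (\<Sum>i\<in>I. s i * \<psi>' t i))"
      "0 + (\<Sum>i\<in>I. s i * m\<psi>' (Some t) i) \<le> (SUP t\<in>T'. 0 + (\<Sum>i\<in>I. s i * m\<psi>' t i))"
      "0 + (\<Sum>i\<in>I. s i * m\<psi>' None i) \<le> (SUP t\<in>T'. 0 + (\<Sum>i\<in>I. s i * m\<psi>' t i))"
      using b1 b2 by (auto intro!: cSUP_upper simp del: add_0)
    then show "\<bar>\<Sum>i\<in>I. s i * \<psi> t i\<bar> \<le> (SUP t\<in>T'. 0 + (\<Sum>i\<in>I. s i * \<psi>' t i)) + (SUP t\<in>T'. 0 + (\<Sum>i\<in>I. s i * m\<psi>' t i))"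
      by (auto simp: \<psi>'_def m\<psi>'_def sum_negf abs_if)
  qed
  have P2: "(SUP t\<in>T'. 0 + (\<Sum>i\<in>I. s i * u' t i)) \<le> (SUP t\<in>T. \<bar>\<Sum>i\<in>I. s i * u t i\<bar>)"
    if s: "s \<in> Sg I" for s
  proof (rule cSUP_least[OF T'ne])
    fix t assume t: "t \<in> T'"
    obtain t0 where t0: "t0 \<in> T" using T by auto
    have ge0: "0 \<le> (SUP t\<in>T. \<bar>\<Sum>i\<in>I. s i * u t i\<bar>)"
      using cSUP_upper[OF t0 bddu[OF s]] by (meson abs_ge_zero order_trans)
    show "0 + (\<Sum>i\<in>I. s i * u' t i) \<le> (SUP t\<in>T. \<bar>\<Sum>i\<in>I. s i * u t i\<bar>)"
    proof (cases t)
      case None then show ?thesis using ge0 by (simp add: u'_def)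
    next
      case (Some t1)
      then have "t1 \<in> T" using t by (auto simp: T'_def)
      then have "\<bar>\<Sum>i\<in>I. s i * u t1 i\<bar> \<le> (SUP t\<in>T. \<bar>\<Sum>i\<in>I. s i * u t i\<bar>)"
        using bddu[OF s] by (rule cSUP_upper)
      then show ?thesis using Some by (simp add: u'_def)
    qed
  qed
  have "(\<Sum>s\<in>Sg I. (SUP t\<in>T. \<bar>\<Sum>i\<in>I. s i * \<psi> t i\<bar>))
      \<le> (\<Sum>s\<in>Sg I. (SUP t\<in>T'. 0 + (\<Sum>i\<in>I. s i * \<psi>' t i)) + (SUP t\<in>T'. 0 + (\<Sum>i\<in>I. s i * m\<psi>' t i)))"
    by (intro sum_mono P1)
  also have "\<dots> \<le> (\<Sum>s\<in>Sg I. (SUP t\<in>T'. 0 + (\<Sum>i\<in>I. s i * u' t i))) + (\<Sum>s\<in>Sg I. (SUP t\<in>T'. 0 + (\<Sum>i\<in>I. s i * u' t i)))"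
    unfolding sum.distrib using A1 A2 by (rule add_mono)
  also have "\<dots> \<le> 2 * (\<Sum>s\<in>Sg I. (SUP t\<in>T. \<bar>\<Sum>i\<in>I. s i * u t i\<bar>))"
    using sum_mono[OF P2, of "Sg I"] by simp
  finally show ?thesis .
qed


lemma cSUP_cmult:
  fixes f :: "'t \<Rightarrow> real"
  assumes T: "T \<noteq> {}" and b: "bdd_above (f ` T)" and c: "0 < c"
  shows "(SUP t\<in>T. c * f t) = c * (SUP t\<in>T. f t)"
proof (rule antisym)
  show "(SUP t\<in>T. c * f t) \<le> c * (SUP t\<in>T. f t)"
    using T b c by (intro cSUP_least) (auto intro: cSUP_upper)
  obtain B where B: "\<And>t. t \<in> T \<Longrightarrow> f t \<le> B" using b by (auto simp: bdd_above_def)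
  have b2: "bdd_above ((\<lambda>t. c * f t) ` T)"
    using B c by (intro bdd_aboveI[of _ "c * B"]) (auto intro: mult_left_mono)
  have "f t \<le> (SUP t\<in>T. c * f t) / c" if "t \<in> T" for t
    using cSUP_upper[OF that b2] c by (simp add: field_simps)
  then have "(SUP t\<in>T. f t) \<le> (SUP t\<in>T. c * f t) / c"
    using T by (intro cSUP_least) auto
  then show "c * (SUP t\<in>T. f t) \<le> (SUP t\<in>T. c * f t)"
    using c by (simp add: field_simps)
qed

lemma contraction_main:
  fixes \<G> :: "('x \<Rightarrow> real) set" and x :: "nat \<Rightarrow> 'x"
  assumes G: "\<G> \<noteq> {}" and K: "0 < K" and n: "0 < n"
    and supb: "\<And>g x. g \<in> \<G> \<Longrightarrow> \<bar>g x\<bar> \<le> K"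
  shows "(\<Sum>s\<in>Sg {..<n}. (SUP g\<in>\<G>. \<bar>(1 / real n) * (\<Sum>i<n. s i * (g (x i))^2)\<bar>))
    \<le> 4 * K * (\<Sum>s\<in>Sg {..<n}. (SUP g\<in>\<G>. \<bar>(1 / real n) * (\<Sum>i<n. g (x i) * s i)\<bar>))"
proof -
  define \<psi> where "\<psi> g i = (g (x i))^2 / real n" for g :: "'x \<Rightarrow> real" and i
  define u where "u g i = 2 * K * g (x i) / real n" for g :: "'x \<Rightarrow> real" and i
  have sq: "\<bar>a\<^sup>2 - b\<^sup>2\<bar> \<le> 2 * K * \<bar>a - b\<bar>" if "\<bar>a\<bar> \<le> K" "\<bar>b\<bar> \<le> K" for a b :: real
  proof -
    have "\<bar>a\<^sup>2 - b\<^sup>2\<bar> = \<bar>a + b\<bar> * \<bar>a - b\<bar>" by (simp add: power2_eq_square abs_mult[symmetric] algebra_simps)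
    also have "\<dots> \<le> 2 * K * \<bar>a - b\<bar>" using that by (intro mult_right_mono) auto
    finally show ?thesis .
  qed
  have sq0: "a\<^sup>2 \<le> 2 * K * \<bar>a\<bar>" if "\<bar>a\<bar> \<le> K" for a :: real
    using sq[OF that, of 0] K by simp
  have main: "(\<Sum>s\<in>Sg {..<n}. (SUP g\<in>\<G>. \<bar>\<Sum>i\<in>{..<n}. s i * \<psi> g i\<bar>))
       \<le> 2 * (\<Sum>s\<in>Sg {..<n}. (SUP g\<in>\<G>. \<bar>\<Sum>i\<in>{..<n}. s i * u g i\<bar>))"
  proof (rule contr_abs[where c = "2 * K * K / real n"])
    fix g i assume g: "g \<in> \<G>"
    have a: "\<bar>g (x i)\<bar> \<le> K" using supb[OF g] .
    have "\<bar>g (x i)\<bar> * \<bar>g (x i)\<bar> \<le> K * K" using a by (intro mult_mono) auto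
    then have "(g (x i))^2 \<le> K * K" by (simp add: power2_eq_square)
    also have "\<dots> \<le> 2 * K * K" using K by simp
    finally have "\<bar>\<psi> g i\<bar> \<le> 2 * K * K / real n" using n by (simp add: \<psi>_def divide_right_mono)
    moreover have "\<bar>u g i\<bar> \<le> 2 * K * K / real n"
      using a K n by (simp add: u_def abs_mult divide_right_mono)
    ultimately show "\<bar>\<psi> g i\<bar> \<le> 2 * K * K / real n \<and> \<bar>u g i\<bar> \<le> 2 * K * K / real n" by simp
  next
    fix g g' i assume g: "g \<in> \<G>" "g' \<in> \<G>"
    have "\<bar>\<psi> g i - \<psi> g' i\<bar> = \<bar>(g (x i))\<^sup>2 - (g' (x i))\<^sup>2\<bar> / real n"
      by (simp add: \<psi>_def diff_divide_distrib[symmetric])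
    also have "\<dots> \<le> 2 * K * \<bar>g (x i) - g' (x i)\<bar> / real n"
      using sq[OF supb[OF g(1)] supb[OF g(2)]] n by (simp add: divide_right_mono)
    also have "\<dots> = \<bar>u g i - u g' i\<bar>" using K n
      by (simp add: u_def diff_divide_distrib[symmetric] right_diff_distrib[symmetric] abs_mult)
    finally show "\<bar>\<psi> g i - \<psi> g' i\<bar> \<le> \<bar>u g i - u g' i\<bar>" .
  next
    fix g i assume g: "g \<in> \<G>"
    show "\<bar>\<psi> g i\<bar> \<le> \<bar>u g i\<bar>"
      using sq0[OF supb[OF g]] K n by (simp add: \<psi>_def u_def abs_mult divide_right_mono)
  qed (use G K n in auto)
  have L: "(\<Sum>s\<in>Sg {..<n}. (SUP g\<in>\<G>. \<bar>(1 / real n) * (\<Sum>i<n. s i * (g (x i))^2)\<bar>))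
      = (\<Sum>s\<in>Sg {..<n}. (SUP g\<in>\<G>. \<bar>\<Sum>i\<in>{..<n}. s i * \<psi> g i\<bar>))"
    by (simp add: \<psi>_def sum_distrib_left mult_ac)
  have R: "(SUP g\<in>\<G>. \<bar>\<Sum>i\<in>{..<n}. s i * u g i\<bar>) = 2 * K * (SUP g\<in>\<G>. \<bar>(1 / real n) * (\<Sum>i<n. g (x i) * s i)\<bar>)"
    if s: "s \<in> Sg {..<n}" for s
  proof -
    have "(SUP g\<in>\<G>. \<bar>\<Sum>i\<in>{..<n}. s i * u g i\<bar>) = (SUP g\<in>\<G>. (2 * K) * \<bar>(1 / real n) * (\<Sum>i<n. g (x i) * s i)\<bar>)"
    proof (intro SUP_cong refl)
      fix g :: "'x \<Rightarrow> real"
      have "(\<Sum>i\<in>{..<n}. s i * u g i) = (2 * K) * ((1 / real n) * (\<Sum>i<n. g (x i) * s i))"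
        by (simp add: u_def sum_distrib_left mult_ac)
      then show "\<bar>\<Sum>i\<in>{..<n}. s i * u g i\<bar> = (2 * K) * \<bar>(1 / real n) * (\<Sum>i<n. g (x i) * s i)\<bar>"
        using K by (simp add: abs_mult)
    qed
    also have "\<dots> = 2 * K * (SUP g\<in>\<G>. \<bar>(1 / real n) * (\<Sum>i<n. g (x i) * s i)\<bar>)"
    proof (rule cSUP_cmult[OF G _ ])
      have "\<bar>(1 / real n) * (\<Sum>i<n. g (x i) * s i)\<bar> \<le> K" if g: "g \<in> \<G>" for g
      proof -
        have "\<bar>\<Sum>i<n. s i * g (x i)\<bar> \<le> real (card {..<n}) * K"
          by (rule sum_Sg_bound[OF s]) (use supb g in auto)
        then show ?thesis using n by (simp add: abs_mult mult_ac field_simps)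
      qed
      then show "bdd_above ((\<lambda>g. \<bar>(1 / real n) * (\<Sum>i<n. g (x i) * s i)\<bar>) ` \<G>)"
        by (intro bdd_aboveI[of _ K]) auto
    qed (use K in simp)
    finally show ?thesis .
  qed
  show ?thesis using main unfolding L by (simp add: R sum_distrib_left mult_ac)
qed


lemma sup_bound:
  fixes F :: "'t \<Rightarrow> 'y \<Rightarrow> real"
  assumes "T \<noteq> {}" "\<And>t. t \<in> T \<Longrightarrow> \<bar>F t x\<bar> \<le> B"
  shows "\<bar>SUP t\<in>T. F t x\<bar> \<le> B"
proof -
  obtain t0 where t0: "t0 \<in> T" using assms(1) by auto
  have bdd: "bdd_above ((\<lambda>t. F t x) ` T)"
    using assms(2) by (intro bdd_aboveI[of _ B]) (auto simp: abs_le_iff)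
  have "(SUP t\<in>T. F t x) \<le> B" using assms by (intro cSUP_least) (auto simp: abs_le_iff)
  moreover have "F t0 x \<le> (SUP t\<in>T. F t x)" by (rule cSUP_upper[OF t0 bdd])
  moreover have "- B \<le> F t0 x" using assms(2)[OF t0] by (simp add: abs_le_iff)
  ultimately show ?thesis by (simp add: abs_le_iff)
qed

lemma sup_meas:
  fixes F :: "'t \<Rightarrow> 'y \<Rightarrow> real"
  assumes "countable T" "\<And>t. t \<in> T \<Longrightarrow> F t \<in> borel_measurable N"
    "\<And>t x. t \<in> T \<Longrightarrow> \<bar>F t x\<bar> \<le> B"
  shows "(\<lambda>x. SUP t\<in>T. F t x) \<in> borel_measurable N"
proof (rule borel_measurable_cSUP)
  fix x show "bdd_above ((\<lambda>t. F t x) ` T)"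
    using assms(3) by (intro bdd_aboveI[of _ B]) (auto simp: abs_le_iff)
qed (use assms in auto)

lemma (in prob_space) integrable_bdd:
  fixes f :: "'a \<Rightarrow> real"
  assumes "f \<in> borel_measurable M" "\<And>x. x \<in> space M \<Longrightarrow> \<bar>f x\<bar> \<le> B"
  shows "integrable M f"
  using assms by (intro integrable_const_bound[where B=B]) auto

lemma sup_upper2:
  fixes F :: "'t \<Rightarrow> real"
  assumes "t \<in> T" "\<And>t. t \<in> T \<Longrightarrow> \<bar>F t\<bar> \<le> B"
  shows "F t \<le> (SUP t\<in>T. F t)"
  using assms by (intro cSUP_upper bdd_aboveI[of _ B]) (auto simp: abs_le_iff)

lemma prob_pair: "prob_space A \<Longrightarrow> prob_space B \<Longrightarrow> prob_space (A \<Otimes>\<^sub>M B)"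
proof -
  assume "prob_space A" "prob_space B"
  then interpret pair_prob_space A B by (simp add: pair_prob_space_def pair_sigma_finite_def prob_space_imp_sigma_finite)
  show ?thesis by (rule P.prob_space_axioms)
qed

lemma (in prob_space) abs_integral_le:
  fixes f :: "'a \<Rightarrow> real"
  assumes "f \<in> borel_measurable M" "\<And>x. x \<in> space M \<Longrightarrow> \<bar>f x\<bar> \<le> B"
  shows "\<bar>\<integral>x. f x \<partial>M\<bar> \<le> B"
proof -
  have "\<bar>\<integral>x. f x \<partial>M\<bar> \<le> (\<integral>x. \<bar>f x\<bar> \<partial>M)" by simp
  also have "\<dots> \<le> (\<integral>x. B \<partial>M)"
    using assms by (intro integral_mono) (auto intro!: integrable_bdd[where B=B])
  finally show ?thesis by (simp add: prob_space)
qed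

lemma sup_meas':
  fixes F :: "'t \<Rightarrow> 'y \<Rightarrow> real"
  assumes "countable T" "\<And>t. t \<in> T \<Longrightarrow> F t \<in> borel_measurable N"
    "\<And>t x. t \<in> T \<Longrightarrow> \<bar>F t x\<bar> \<le> B x"
  shows "(\<lambda>x. SUP t\<in>T. F t x) \<in> borel_measurable N"
proof (rule borel_measurable_cSUP)
  fix x show "bdd_above ((\<lambda>t. F t x) ` T)"
    using assms(3) by (intro bdd_aboveI[of _ "B x"]) (auto simp: abs_le_iff)
qed (use assms in auto)


locale sset =
  fixes Qz :: "'x::euclidean_space measure" and \<G> :: "('x \<Rightarrow> real) set" and n :: nat and K :: real
  assumes Qp: "prob_space Qz" and Qs: "sets Qz = sets borel" and cG: "countable \<G>" and Gne: "\<G> \<noteq> {}"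
    and gmeas: "\<And>g. g \<in> \<G> \<Longrightarrow> g \<in> borel_measurable borel"
    and supb: "\<And>g x. g \<in> \<G> \<Longrightarrow> \<bar>g x\<bar> \<le> K"
    and Kpos: "0 < K" and npos: "0 < n"

context sset
begin

lemma gQ[measurable]: "g \<in> \<G> \<Longrightarrow> g \<in> borel_measurable Qz"
  using gmeas measurable_cong_sets[OF Qs refl] by blast

lemma sq_le: "g \<in> \<G> \<Longrightarrow> (g x)^2 \<le> K^2"
  using supb[of g x] by (metis abs_ge_zero power2_abs power_mono)

lemma empsq_bound: "g \<in> \<G> \<Longrightarrow> 0 \<le> empsq n x g \<and> empsq n x g \<le> K^2"
proof -
  assume g: "g \<in> \<G>"
  have "(\<Sum>i<n. (g (x i))^2) \<le> (\<Sum>i<n. K^2)" by (intro sum_mono sq_le g)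
  then show ?thesis using npos by (auto simp: empsq_def field_simps intro: sum_nonneg)
qed

lemma L2sq_bound: "g \<in> \<G> \<Longrightarrow> 0 \<le> L2sq Qz g \<and> L2sq Qz g \<le> K^2"
proof -
  assume g: "g \<in> \<G>"
  interpret Q: prob_space Qz by (rule Qp)
  have "integrable Qz (\<lambda>x. (g x)^2)"
    using g sq_le[OF g] by (intro Q.integrable_bdd[where B="K^2"]) auto
  have "(\<integral>x. (g x)^2 \<partial>Qz) \<le> (\<integral>x. K^2 \<partial>Qz)"
    using g sq_le[OF g] by (intro integral_mono Q.integrable_bdd[where B="K^2"]) auto
  then show ?thesis by (auto simp: L2sq_def Q.prob_space)
qed

abbreviation "PX \<equiv> PiM {..<n} (\<lambda>_. Qz)"
abbreviation "PE \<equiv> PiM {..<n} (\<lambda>_. rademacher)"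
abbreviation "QQ \<equiv> PiM {..<n} (\<lambda>_. Qz \<Otimes>\<^sub>M Qz)"

lemma PX_prob: "prob_space PX" by (rule prob_space_PiM) (rule Qp)
lemma PE_prob: "prob_space PE" by (rule prob_space_PiM) (rule rad_prob)
lemma QQ_prob: "prob_space QQ"
  by (rule prob_space_PiM) (intro prob_pair Qp)

definition "Dx x = (SUP g\<in>\<G>. \<bar>empsq n x g - L2sq Qz g\<bar>)"
definition "Phi x b = (SUP g\<in>\<G>. \<bar>empsq n x g - empsq n b g\<bar>)"

lemma comp_meas[measurable]:
  "g \<in> \<G> \<Longrightarrow> i \<in> {..<n} \<Longrightarrow> (\<lambda>x. g (x i)) \<in> borel_measurable PX"
  by measurable


lemma empsq_meas[measurable]: "g \<in> \<G> \<Longrightarrow> f \<in> measurable N PX \<Longrightarrow> (\<lambda>x. empsq n (f x) g) \<in> borel_measurable N"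
  unfolding empsq_def by measurable

lemma diff_bound: "g \<in> \<G> \<Longrightarrow> \<bar>empsq n x g - empsq n b g\<bar> \<le> K^2"
  using empsq_bound[of g x] empsq_bound[of g b] by (auto simp: abs_le_iff)

lemma diffL_bound: "g \<in> \<G> \<Longrightarrow> \<bar>empsq n x g - L2sq Qz g\<bar> \<le> K^2"
  using empsq_bound[of g x] L2sq_bound[of g] by (auto simp: abs_le_iff)

lemma Dx_bound: "\<bar>Dx x\<bar> \<le> K^2"
  unfolding Dx_def by (rule sup_bound[where F="\<lambda>g x. \<bar>empsq n x g - L2sq Qz g\<bar>"]) (use Gne diffL_bound in auto)

lemma Phi_bound: "\<bar>Phi x b\<bar> \<le> K^2"
  unfolding Phi_def by (rule sup_bound[where F="\<lambda>g b. \<bar>empsq n x g - empsq n b g\<bar>"]) (use Gne diff_bound in auto)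

lemma Dx_meas[measurable]: "f \<in> measurable N PX \<Longrightarrow> (\<lambda>x. Dx (f x)) \<in> borel_measurable N"
  unfolding Dx_def by (rule sup_meas[where F="\<lambda>g y. \<bar>empsq n (f y) g - L2sq Qz g\<bar>" and B="K^2"]) (auto intro: cG diffL_bound)

lemma Phi_meas[measurable]: "f \<in> measurable N PX \<Longrightarrow> h \<in> measurable N PX \<Longrightarrow> (\<lambda>x. Phi (f x) (h x)) \<in> borel_measurable N"
  unfolding Phi_def by (rule sup_meas[where F="\<lambda>g y. \<bar>empsq n (f y) g - empsq n (h y) g\<bar>" and B="K^2"]) (auto intro: cG diff_bound)

lemma Phi_meas1[measurable]: "(\<lambda>b. Phi x b) \<in> borel_measurable PX"
  unfolding Phi_def by (rule sup_meas[where F="\<lambda>g b. \<bar>empsq n x g - empsq n b g\<bar>" and B="K^2"]) (auto intro: cG diff_bound)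

lemma L2sq_int: "g \<in> \<G> \<Longrightarrow> L2sq Qz g = (\<integral>b. empsq n b g \<partial>PX)"
proof -
  assume g: "g \<in> \<G>"
  interpret P: prob_space PX by (rule PX_prob)
  have comp: "(\<integral>b. (g (b i))^2 \<partial>PX) = L2sq Qz g" if i: "i \<in> {..<n}" for i
  proof -
    have "(\<integral>b. (g (b i))^2 \<partial>PX) = (\<integral>y. (g y)^2 \<partial>distr PX Qz (\<lambda>b. b i))"
      using g i by (subst integral_distr) auto
    also have "distr PX Qz (\<lambda>b. b i) = Qz" using i Qp by (intro distr_PiM_component) auto
    finally show ?thesis by (simp add: L2sq_def)
  qed
  have int: "integrable PX (\<lambda>b. (g (b i))^2)" if "i \<in> {..<n}" for i
    using g that sq_le[OF g] by (intro P.integrable_bdd[where B="K^2"]) auto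
  have "(\<integral>b. empsq n b g \<partial>PX) = (1 / real n) * (\<Sum>i<n. \<integral>b. (g (b i))^2 \<partial>PX)"
    unfolding empsq_def using int by (simp add: integral_sum)
  also have "\<dots> = L2sq Qz g" using comp npos by simp
  finally show ?thesis by simp
qed

lemma Dx_le: "x \<in> space PX \<Longrightarrow> Dx x \<le> (\<integral>b. Phi x b \<partial>PX)"
proof -
  interpret P: prob_space PX by (rule PX_prob)
  have "\<bar>empsq n x g - L2sq Qz g\<bar> \<le> (\<integral>b. Phi x b \<partial>PX)" if g: "g \<in> \<G>" for g
  proof -
    have int: "integrable PX (\<lambda>b. empsq n b g)"
      using g empsq_bound[OF g] by (intro P.integrable_bdd[where B="K^2"]) auto
    have intP: "integrable PX (\<lambda>b. Phi x b)"
      using Phi_bound by (intro P.integrable_bdd[where B="K^2"]) auto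
    have "empsq n x g - L2sq Qz g = (\<integral>b. empsq n x g - empsq n b g \<partial>PX)"
      using int by (simp add: L2sq_int[OF g] P.prob_space)
    then have "\<bar>empsq n x g - L2sq Qz g\<bar> \<le> (\<integral>b. \<bar>empsq n x g - empsq n b g\<bar> \<partial>PX)"
      by (simp add: integral_abs_bound)
    also have "\<dots> \<le> (\<integral>b. Phi x b \<partial>PX)"
    proof (rule integral_mono[OF _ intP])
      show "integrable PX (\<lambda>b. \<bar>empsq n x g - empsq n b g\<bar>)"
        using g diff_bound by (intro P.integrable_bdd[where B="K^2"]) auto
      fix b show "\<bar>empsq n x g - empsq n b g\<bar> \<le> Phi x b"
        unfolding Phi_def by (rule sup_upper2[where F="\<lambda>g. \<bar>empsq n x g - empsq n b g\<bar>" and B="K^2", OF g]) (use diff_bound in auto)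
    qed
    finally show ?thesis .
  qed
  then show ?thesis unfolding Dx_def using Gne by (intro cSUP_least) auto
qed


lemma empsq_cong: "(\<And>i. i < n \<Longrightarrow> x i = x' i) \<Longrightarrow> empsq n x g = empsq n x' g"
proof -
  assume "\<And>i. i < n \<Longrightarrow> x i = x' i"
  then have "(\<Sum>i<n. (g (x i))^2) = (\<Sum>i<n. (g (x' i))^2)" by (intro sum.cong) auto
  then show ?thesis by (simp add: empsq_def)
qed

lemma Phi_cong: "(\<And>i. i < n \<Longrightarrow> x i = x' i) \<Longrightarrow> (\<And>i. i < n \<Longrightarrow> b i = b' i) \<Longrightarrow> Phi x b = Phi x' b'"
  unfolding Phi_def by (intro SUP_cong refl) (metis empsq_cong)

lemma Dx_cong: "(\<And>i. i < n \<Longrightarrow> x i = x' i) \<Longrightarrow> Dx x = Dx x'"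
  unfolding Dx_def by (intro SUP_cong refl) (metis empsq_cong)

definition "Phq q = Phi (\<lambda>i\<in>{..<n}. fst (q i)) (\<lambda>i\<in>{..<n}. snd (q i))"

lemma restr_fst_meas[measurable]: "(\<lambda>q. \<lambda>i\<in>{..<n}. fst (q i)) \<in> measurable QQ PX"
  by (rule measurable_restrict) measurable

lemma restr_snd_meas[measurable]: "(\<lambda>q. \<lambda>i\<in>{..<n}. snd (q i)) \<in> measurable QQ PX"
  by (rule measurable_restrict) measurable

lemma Phq_meas[measurable]: "Phq \<in> borel_measurable QQ"
  unfolding Phq_def by measurable

lemma Phq_bound: "\<bar>Phq q\<bar> \<le> K^2"
  unfolding Phq_def by (rule Phi_bound)

lemma step_ghost: "(\<integral>x. Dx x \<partial>PX) \<le> (\<integral>q. Phq q \<partial>QQ)"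
proof -
  interpret P: prob_space PX by (rule PX_prob)
  interpret PP: pair_prob_space PX PX by unfold_locales
  have meas2[measurable]: "(\<lambda>p. Phi (fst p) (snd p)) \<in> borel_measurable (PX \<Otimes>\<^sub>M PX)" by measurable
  have intI: "integrable PX (\<lambda>x. \<integral>b. Phi x b \<partial>PX)"
  proof (rule P.integrable_bdd[where B="K^2"])
    show "(\<lambda>x. \<integral>b. Phi x b \<partial>PX) \<in> borel_measurable PX" by measurable
    fix x show "\<bar>\<integral>b. Phi x b \<partial>PX\<bar> \<le> K^2" by (rule P.abs_integral_le) (auto intro: Phi_bound)
  qed
  have "(\<integral>x. Dx x \<partial>PX) \<le> (\<integral>x. (\<integral>b. Phi x b \<partial>PX) \<partial>PX)"
    by (rule integral_mono[OF P.integrable_bdd[where B="K^2"] intI Dx_le]) (auto intro: Dx_bound)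
  also have "\<dots> = (\<integral>p. Phi (fst p) (snd p) \<partial>(PX \<Otimes>\<^sub>M PX))"
    using PP.integral_fst'[of "\<lambda>p. Phi (fst p) (snd p)"]
    by (simp add: PP.integrable_bdd[where B="K^2"] Phi_bound)
  also have "\<dots> = (\<integral>p. Phq (\<lambda>i\<in>{..<n}. (fst p i, snd p i)) \<partial>(PX \<Otimes>\<^sub>M PX))"
    by (intro Bochner_Integration.integral_cong refl) (auto simp: Phq_def intro!: Phi_cong)
  also have "\<dots> = (\<integral>q. Phq q \<partial>distr (PX \<Otimes>\<^sub>M PX) QQ (\<lambda>p. \<lambda>i\<in>{..<n}. (fst p i, snd p i)))"
  proof (rule integral_distr[symmetric])
    show "(\<lambda>p. \<lambda>i\<in>{..<n}. (fst p i, snd p i)) \<in> measurable (PX \<Otimes>\<^sub>M PX) QQ"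
      by (rule measurable_restrict) measurable
  qed measurable
  also have "\<dots> = (\<integral>q. Phq q \<partial>QQ)"
    by (subst PiM_zip) (auto intro: Qp)
  finally show ?thesis .
qed


definition "Shx x s = (SUP g\<in>\<G>. \<bar>(1 / real n) * (\<Sum>i<n. s i * (g (x i))^2)\<bar>)"

lemma Shx_term_bound: "s \<in> Sg {..<n} \<Longrightarrow> g \<in> \<G> \<Longrightarrow> \<bar>(1 / real n) * (\<Sum>i<n. s i * (g (x i))^2)\<bar> \<le> K^2"
proof -
  assume s: "s \<in> Sg {..<n}" and g: "g \<in> \<G>"
  have "\<bar>\<Sum>i<n. s i * (g (x i))^2\<bar> \<le> real (card {..<n}) * K^2"
    by (rule sum_Sg_bound[OF s]) (use sq_le[OF g] in auto)
  then show ?thesis using npos by (simp add: abs_mult field_simps)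
qed

lemma Shx_bound: "s \<in> Sg {..<n} \<Longrightarrow> \<bar>Shx x s\<bar> \<le> K^2"
  unfolding Shx_def by (rule sup_bound[where F="\<lambda>g x. \<bar>(1 / real n) * (\<Sum>i<n. s i * (g (x i))^2)\<bar>"]) (use Gne Shx_term_bound in auto)

lemma Shx_meas[measurable]: "s \<in> Sg {..<n} \<Longrightarrow> f \<in> measurable N PX \<Longrightarrow> (\<lambda>y. Shx (f y) s) \<in> borel_measurable N"
  unfolding Shx_def by (rule sup_meas[where F="\<lambda>g y. \<bar>(1 / real n) * (\<Sum>i<n. s i * (g (f y i))^2)\<bar>" and B="K^2"]) (use cG Shx_term_bound in auto)

lemma Shx_cong: "(\<And>i. i < n \<Longrightarrow> x i = x' i) \<Longrightarrow> Shx x s = Shx x' s"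
proof -
  assume "\<And>i. i < n \<Longrightarrow> x i = x' i"
  then have "(\<Sum>i<n. s i * (g (x i))^2) = (\<Sum>i<n. s i * (g (x' i))^2)" for g by (intro sum.cong) auto
  then show ?thesis by (simp add: Shx_def)
qed

definition "tau s q = (\<lambda>i\<in>{..<n}. if s i = (1::real) then q i else prod.swap (q i))"

lemma tau_inv:
  assumes Fm: "F \<in> borel_measurable QQ"
  shows "(\<integral>q. F (tau s q) \<partial>QQ) = (\<integral>q. (F q :: real) \<partial>QQ)"
proof -
  interpret PQ: pair_sigma_finite Qz Qz
    using Qp by (simp add: pair_sigma_finite_def prob_space_imp_sigma_finite)
  have sw: "distr (Qz \<Otimes>\<^sub>M Qz) (Qz \<Otimes>\<^sub>M Qz) prod.swap = Qz \<Otimes>\<^sub>M Qz"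
  proof -
    have "prod.swap = (\<lambda>(x, y). (y, x))" by (auto simp: fun_eq_iff)
    then show ?thesis using PQ.distr_pair_swap by metis
  qed
  have fm: "(\<lambda>p. if s i = 1 then p else prod.swap p) \<in> measurable (Qz \<Otimes>\<^sub>M Qz) (Qz \<Otimes>\<^sub>M Qz)" for i
  proof -
    have e: "prod.swap = (\<lambda>p. (snd p, fst p))" by (auto simp: fun_eq_iff)
    have "prod.swap \<in> measurable (Qz \<Otimes>\<^sub>M Qz) (Qz \<Otimes>\<^sub>M Qz)" unfolding e by measurable
    then show ?thesis by (cases "s i = 1") auto
  qed
  have fd: "distr (Qz \<Otimes>\<^sub>M Qz) (Qz \<Otimes>\<^sub>M Qz) (\<lambda>p. if s i = 1 then p else prod.swap p) = Qz \<Otimes>\<^sub>M Qz" for i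
    by (cases "s i = 1") (simp_all add: sw)
  have D: "distr QQ QQ (tau s) = QQ"
    unfolding tau_def using PiM_coord_map[OF _ prob_pair[OF Qp Qp], of "{..<n}" "\<lambda>i p. if s i = 1 then p else prod.swap p"] fm fd
    by simp
  have tm: "tau s \<in> measurable QQ QQ"
    unfolding tau_def by (rule measurable_restrict) (use fm in measurable)
  have "(\<integral>q. F q \<partial>QQ) = (\<integral>q. F q \<partial>distr QQ QQ (tau s))" by (simp add: D)
  also have "\<dots> = (\<integral>q. F (tau s q) \<partial>QQ)" by (rule integral_distr[OF tm Fm])
  finally show ?thesis by simp
qed


lemma Shx_fst_int: "s \<in> Sg {..<n} \<Longrightarrow> (\<integral>q. Shx (\<lambda>i\<in>{..<n}. fst (q i)) s \<partial>QQ) = (\<integral>x. Shx x s \<partial>PX)"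
proof -
  assume s: "s \<in> Sg {..<n}"
  interpret Q: prob_space Qz by (rule Qp)
  have "distr QQ PX (compose {..<n} fst) = PiM {..<n} (\<lambda>i. distr (Qz \<Otimes>\<^sub>M Qz) Qz fst)"
    by (rule distr_PiM_finite_prob_space') (auto intro: prob_pair Qp)
  also have "\<dots> = PX" by (simp add: Q.distr_pair_fst)
  finally have D0: "distr QQ PX (compose {..<n} fst) = PX" .
  have C: "compose {..<n} fst = (\<lambda>q. \<lambda>i\<in>{..<n}. fst (q i))" by (simp add: fun_eq_iff compose_def)
  have D: "distr QQ PX (\<lambda>q. \<lambda>i\<in>{..<n}. fst (q i)) = PX" using D0 unfolding C .
  have "(\<integral>x. Shx x s \<partial>PX) = (\<integral>x. Shx x s \<partial>distr QQ PX (\<lambda>q. \<lambda>i\<in>{..<n}. fst (q i)))" by (simp add: D)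
  also have "\<dots> = (\<integral>q. Shx (\<lambda>i\<in>{..<n}. fst (q i)) s \<partial>QQ)"
    by (rule integral_distr) (use s in measurable)
  finally show ?thesis by simp
qed

lemma tau_term:
  assumes s: "s \<in> Sg {..<n}" and i: "i < n"
  shows "(g (fst (tau s q i)))^2 - (g (snd (tau s q i)))^2 = s i * (g (fst (q i)))^2 - s i * (g (snd (q i)))^2"
proof -
  have "s i = -1 \<or> s i = 1" using s i by (auto simp: Sg_def PiE_iff)
  then show ?thesis using i by (auto simp: tau_def prod.swap_def)
qed

lemma Phq_tau: "s \<in> Sg {..<n} \<Longrightarrow> Phq (tau s q) \<le> Shx (\<lambda>i\<in>{..<n}. fst (q i)) s + Shx (\<lambda>i\<in>{..<n}. snd (q i)) s"
proof -
  assume s: "s \<in> Sg {..<n}"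
  have "\<bar>empsq n (\<lambda>i\<in>{..<n}. fst (tau s q i)) g - empsq n (\<lambda>i\<in>{..<n}. snd (tau s q i)) g\<bar>
     \<le> Shx (\<lambda>i\<in>{..<n}. fst (q i)) s + Shx (\<lambda>i\<in>{..<n}. snd (q i)) s" if g: "g \<in> \<G>" for g
  proof -
    have "empsq n (\<lambda>i\<in>{..<n}. fst (tau s q i)) g - empsq n (\<lambda>i\<in>{..<n}. snd (tau s q i)) g
      = (1 / real n) * (\<Sum>i<n. (g (fst (tau s q i)))^2 - (g (snd (tau s q i)))^2)"
      by (simp add: empsq_def sum_subtractf right_diff_distrib)
    also have "\<dots> = (1 / real n) * (\<Sum>i<n. s i * (g (fst (q i)))^2 - s i * (g (snd (q i)))^2)"
      using tau_term[OF s] by (intro arg_cong2[where f="(*)"] sum.cong) auto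
    also have "\<dots> = (1 / real n) * (\<Sum>i<n. s i * (g ((\<lambda>i\<in>{..<n}. fst (q i)) i))^2)
        - (1 / real n) * (\<Sum>i<n. s i * (g ((\<lambda>i\<in>{..<n}. snd (q i)) i))^2)"
      by (simp add: sum_subtractf right_diff_distrib)
    finally have eq: "empsq n (\<lambda>i\<in>{..<n}. fst (tau s q i)) g - empsq n (\<lambda>i\<in>{..<n}. snd (tau s q i)) g = \<dots>" .
    have u1: "\<bar>(1 / real n) * (\<Sum>i<n. s i * (g ((\<lambda>i\<in>{..<n}. fst (q i)) i))^2)\<bar> \<le> Shx (\<lambda>i\<in>{..<n}. fst (q i)) s"
      unfolding Shx_def by (rule sup_upper2[where F="\<lambda>g. \<bar>(1 / real n) * (\<Sum>i<n. s i * (g ((\<lambda>i\<in>{..<n}. fst (q i)) i))^2)\<bar>" and B="K^2", OF g]) (use Shx_term_bound[OF s] in auto)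
    have u2: "\<bar>(1 / real n) * (\<Sum>i<n. s i * (g ((\<lambda>i\<in>{..<n}. snd (q i)) i))^2)\<bar> \<le> Shx (\<lambda>i\<in>{..<n}. snd (q i)) s"
      unfolding Shx_def by (rule sup_upper2[where F="\<lambda>g. \<bar>(1 / real n) * (\<Sum>i<n. s i * (g ((\<lambda>i\<in>{..<n}. snd (q i)) i))^2)\<bar>" and B="K^2", OF g]) (use Shx_term_bound[OF s] in auto)
    show ?thesis unfolding eq using u1 u2 by linarith
  qed
  moreover have "Phq (tau s q) = (SUP g\<in>\<G>. \<bar>empsq n (\<lambda>i\<in>{..<n}. fst (tau s q i)) g - empsq n (\<lambda>i\<in>{..<n}. snd (tau s q i)) g\<bar>)"
    by (simp add: Phq_def Phi_def)
  ultimately show ?thesis using Gne by (auto intro!: cSUP_least)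
qed

lemma step_swap: "s \<in> Sg {..<n} \<Longrightarrow> (\<integral>q. Phq q \<partial>QQ) \<le> 2 * (\<integral>x. Shx x s \<partial>PX)"
proof -
  assume s: "s \<in> Sg {..<n}"
  interpret QQp: prob_space QQ by (rule QQ_prob)
  have tm: "tau t \<in> measurable QQ QQ" for t
    unfolding tau_def
  proof (rule measurable_restrict)
    fix i
    have e: "prod.swap = (\<lambda>p. (snd p, fst p))" by (auto simp: fun_eq_iff)
    show "(\<lambda>q. if t i = 1 then q i else prod.swap (q i)) \<in> measurable QQ (Qz \<Otimes>\<^sub>M Qz)" if "i \<in> {..<n}"
      unfolding e using that by measurable
  qed
  have m1[measurable]: "(\<lambda>q. Shx (\<lambda>i\<in>{..<n}. fst (q i)) s) \<in> borel_measurable QQ" using s by measurable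
  have m2[measurable]: "(\<lambda>q. Shx (\<lambda>i\<in>{..<n}. snd (q i)) s) \<in> borel_measurable QQ" using s by measurable
  have i1: "integrable QQ (\<lambda>q. Shx (\<lambda>i\<in>{..<n}. fst (q i)) s)"
    by (rule QQp.integrable_bdd[where B="K^2"]) (use s Shx_bound in auto)
  have i2: "integrable QQ (\<lambda>q. Shx (\<lambda>i\<in>{..<n}. snd (q i)) s)"
    by (rule QQp.integrable_bdd[where B="K^2"]) (use s Shx_bound in auto)
  have "(\<integral>q. Phq q \<partial>QQ) = (\<integral>q. Phq (tau s q) \<partial>QQ)" by (rule tau_inv[symmetric]) measurable
  also have "\<dots> \<le> (\<integral>q. Shx (\<lambda>i\<in>{..<n}. fst (q i)) s + Shx (\<lambda>i\<in>{..<n}. snd (q i)) s \<partial>QQ)"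
  proof (rule integral_mono)
    show "integrable QQ (\<lambda>q. Phq (tau s q))"
      by (rule QQp.integrable_bdd[where B="K^2"]) (auto intro: Phq_bound measurable_compose[OF tm Phq_meas])
    show "integrable QQ (\<lambda>q. Shx (\<lambda>i\<in>{..<n}. fst (q i)) s + Shx (\<lambda>i\<in>{..<n}. snd (q i)) s)"
      using i1 i2 by simp
  qed (rule Phq_tau[OF s])
  also have "\<dots> = (\<integral>q. Shx (\<lambda>i\<in>{..<n}. fst (q i)) s \<partial>QQ) + (\<integral>q. Shx (\<lambda>i\<in>{..<n}. snd (q i)) s \<partial>QQ)"
    using i1 i2 by simp
  also have "(\<integral>q. Shx (\<lambda>i\<in>{..<n}. snd (q i)) s \<partial>QQ) = (\<integral>q. Shx (\<lambda>i\<in>{..<n}. fst (q i)) s \<partial>QQ)"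
  proof -
    have "(\<integral>q. Shx (\<lambda>i\<in>{..<n}. snd (q i)) s \<partial>QQ) = (\<integral>q. Shx (\<lambda>i\<in>{..<n}. fst (tau (\<lambda>_. -1) q i)) s \<partial>QQ)"
      by (intro Bochner_Integration.integral_cong refl Shx_cong) (auto simp: tau_def prod.swap_def)
    also have "\<dots> = (\<integral>q. Shx (\<lambda>i\<in>{..<n}. fst (q i)) s \<partial>QQ)"
      by (rule tau_inv[where F="\<lambda>q. Shx (\<lambda>i\<in>{..<n}. fst (q i)) s"]) (rule m1)
    finally show ?thesis .
  qed
  also have "(\<integral>q. Shx (\<lambda>i\<in>{..<n}. fst (q i)) s \<partial>QQ) = (\<integral>x. Shx x s \<partial>PX)" by (rule Shx_fst_int[OF s])
  finally show ?thesis by simp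
qed


end


context sset
begin

definition "Sx x s = (SUP g\<in>\<G>. \<bar>(1 / real n) * (\<Sum>i<n. g (x i) * s i)\<bar>)"

lemma Sx_term_bound: "g \<in> \<G> \<Longrightarrow> \<bar>(1 / real n) * (\<Sum>i<n. g (x i) * s i)\<bar> \<le> K * (\<Sum>i<n. \<bar>s i\<bar>)"
proof -
  assume g: "g \<in> \<G>"
  have "\<bar>\<Sum>i<n. g (x i) * s i\<bar> \<le> (\<Sum>i<n. \<bar>g (x i) * s i\<bar>)" by (rule sum_abs)
  also have "\<dots> \<le> (\<Sum>i<n. K * \<bar>s i\<bar>)"
    by (intro sum_mono) (simp add: abs_mult mult_right_mono supb[OF g])
  finally have "\<bar>\<Sum>i<n. g (x i) * s i\<bar> \<le> K * (\<Sum>i<n. \<bar>s i\<bar>)" by (simp add: sum_distrib_left)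
  moreover have "0 \<le> K * (\<Sum>i<n. \<bar>s i\<bar>)" using Kpos by (simp add: sum_nonneg)
  ultimately have h: "\<bar>\<Sum>i<n. g (x i) * s i\<bar> \<le> K * (\<Sum>i<n. \<bar>s i\<bar>)" by simp
  have n1: "1 \<le> real n" using npos by simp
  have "\<bar>(1 / real n) * (\<Sum>i<n. g (x i) * s i)\<bar> = (1 / real n) * \<bar>\<Sum>i<n. g (x i) * s i\<bar>"
    using npos by (simp add: abs_mult)
  also have "\<dots> \<le> 1 * \<bar>\<Sum>i<n. g (x i) * s i\<bar>"
    using n1 by (intro mult_right_mono) auto
  finally show ?thesis using h by linarith
qed

lemma Sx_term_bound2: "g \<in> \<G> \<Longrightarrow> s \<in> Sg {..<n} \<Longrightarrow> \<bar>(1 / real n) * (\<Sum>i<n. g (x i) * s i)\<bar> \<le> K"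
proof -
  assume g: "g \<in> \<G>" and s: "s \<in> Sg {..<n}"
  have "\<bar>\<Sum>i<n. s i * g (x i)\<bar> \<le> real (card {..<n}) * K"
    by (rule sum_Sg_bound[OF s]) (use supb[OF g] in auto)
  then show ?thesis using npos by (simp add: abs_mult field_simps mult.commute)
qed

lemma Sx_bound: "s \<in> Sg {..<n} \<Longrightarrow> \<bar>Sx x s\<bar> \<le> K"
  unfolding Sx_def by (rule sup_bound[where F="\<lambda>g x. \<bar>(1 / real n) * (\<Sum>i<n. g (x i) * s i)\<bar>"]) (use Gne Sx_term_bound2 in auto)

lemma Sx_meas[measurable]: "f \<in> measurable N PX \<Longrightarrow> h \<in> measurable N PE \<Longrightarrow> (\<lambda>y. Sx (f y) (h y)) \<in> borel_measurable N"
  unfolding Sx_def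
proof (rule sup_meas'[where F="\<lambda>g y. \<bar>(1 / real n) * (\<Sum>i<n. g (f y i) * h y i)\<bar>" and B="\<lambda>y. K * (\<Sum>i<n. \<bar>h y i\<bar>)"])
  assume [measurable]: "f \<in> measurable N PX" and hm: "h \<in> measurable N PE"
  have [measurable]: "(\<lambda>y. h y i) \<in> borel_measurable N" if "i \<in> {..<n}" for i
    using measurable_compose[OF hm measurable_component_singleton[OF that]] measurable_cong_sets[OF refl sets_rad] by blast
  fix g assume [measurable]: "g \<in> \<G>"
  show "(\<lambda>y. \<bar>(1 / real n) * (\<Sum>i<n. g (f y i) * h y i)\<bar>) \<in> borel_measurable N" by measurable
qed (use cG Sx_term_bound in auto)

lemma Sx_meas2[measurable]: "s \<in> Sg {..<n} \<Longrightarrow> (\<lambda>x. Sx x s) \<in> borel_measurable PX"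
proof -
  assume s: "s \<in> Sg {..<n}"
  then have "s \<in> space PE" by (auto simp: Sg_def space_PiM PiE_iff)
  then show ?thesis by (intro Sx_meas measurable_ident_sets) auto
qed

lemma Sx_meas1[measurable]: "(\<lambda>s. Sx x s) \<in> borel_measurable PE"
  unfolding Sx_def
  by (rule sup_meas'[where F="\<lambda>g s. \<bar>(1 / real n) * (\<Sum>i<n. g (x i) * s i)\<bar>" and B="\<lambda>s. K * (\<Sum>i<n. \<bar>s i\<bar>)"])
    (use cG Sx_term_bound in auto)

lemma AE_PE: "AE s in PE. s \<in> Sg {..<n}"
proof -
  have "AE s in PE. \<forall>i\<in>{..<n}. s i \<in> {-1,1}"
    by (intro eventually_ball_finite ballI AE_PiM_component AE_rad rad_prob) auto
  then show ?thesis
    by (rule AE_mp) (auto intro!: AE_I2 simp: Sg_def space_PiM PiE_iff)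
qed

lemma AE_XE: "AE p in PX \<Otimes>\<^sub>M PE. snd p \<in> Sg {..<n}"
proof -
  interpret PEp: prob_space PE by (rule PE_prob)
  have "AE p in PX \<Otimes>\<^sub>M PE. \<forall>i\<in>{..<n}. snd p i \<in> {-1,1}"
  proof (rule pair_sigma_finite.AE_pair_measure)
    show "pair_sigma_finite PX PE"
      using PX_prob PE_prob by (simp add: pair_sigma_finite_def prob_space_imp_sigma_finite)
    show "{x \<in> space (PX \<Otimes>\<^sub>M PE). \<forall>i\<in>{..<n}. snd x i \<in> {- 1, 1}} \<in> sets (PX \<Otimes>\<^sub>M PE)"
      by measurable
    show "AE x in PX. AE y in PE. \<forall>i\<in>{..<n}. snd (x, y) i \<in> {- 1, 1}"
      using AE_PE by (auto simp: Sg_def PiE_iff)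
  qed
  then show ?thesis
    by (rule AE_mp) (auto intro!: AE_I2 simp: Sg_def space_pair_measure space_PiM PiE_iff)
qed

lemma SH_le: "(\<Sum>s\<in>Sg {..<n}. Shx x s) \<le> 4 * K * (\<Sum>s\<in>Sg {..<n}. Sx x s)"
proof -
  have "(\<Sum>s\<in>Sg {..<n}. (SUP g\<in>\<G>. \<bar>(1 / real n) * (\<Sum>i<n. s i * (g (x i))^2)\<bar>))
    \<le> 4 * K * (\<Sum>s\<in>Sg {..<n}. (SUP g\<in>\<G>. \<bar>(1 / real n) * (\<Sum>i<n. g (x i) * s i)\<bar>))"
    using contraction_main[where \<G>=\<G> and K=K and n=n and x=x] Gne Kpos npos supb by blast
  then show ?thesis by (simp only: Shx_def Sx_def)
qed

lemma step_avg: "(\<integral>x. Dx x \<partial>PX) \<le> 8 * K * (\<integral>p. Sx (fst p) (snd p) \<partial>(PX \<Otimes>\<^sub>M PE))"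
proof -
  interpret P: prob_space PX by (rule PX_prob)
  interpret PEp: prob_space PE by (rule PE_prob)
  interpret PP: pair_prob_space PX PE by unfold_locales
  define SH where "SH x = (\<Sum>s\<in>Sg {..<n}. Shx x s)" for x
  define SX where "SX x = (\<Sum>s\<in>Sg {..<n}. Sx x s)" for x
  have c: "real (card (Sg {..<n})) = 2 ^ n" by (simp add: card_Sg)
  have intShx: "integrable PX (\<lambda>x. Shx x s)" if "s \<in> Sg {..<n}" for s
    by (rule P.integrable_bdd[where B="K^2"]) (use that Shx_bound in auto)
  have intSx: "integrable PX (\<lambda>x. Sx x s)" if "s \<in> Sg {..<n}" for s
    by (rule P.integrable_bdd[where B="K"]) (use that Sx_bound in auto)
  have intSH: "integrable PX SH" unfolding SH_def
    by (rule Bochner_Integration.integrable_sum) (rule intShx)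
  have intSX: "integrable PX SX" unfolding SX_def
    by (rule Bochner_Integration.integrable_sum) (rule intSx)
  have A: "(\<integral>x. Dx x \<partial>PX) \<le> (\<integral>q. Phq q \<partial>QQ)" by (rule step_ghost)
  have B: "(\<Sum>s\<in>Sg {..<n}. (\<integral>q. Phq q \<partial>QQ)) = 2 ^ n * (\<integral>q. Phq q \<partial>QQ)"
    by (simp add: c)
  have C: "(\<Sum>s\<in>Sg {..<n}. (\<integral>q. Phq q \<partial>QQ)) \<le> (\<Sum>s\<in>Sg {..<n}. 2 * (\<integral>x. Shx x s \<partial>PX))"
    by (intro sum_mono step_swap)
  have E: "(\<integral>x. SH x \<partial>PX) = (\<Sum>s\<in>Sg {..<n}. (\<integral>x. Shx x s \<partial>PX))"
    unfolding SH_def by (rule Bochner_Integration.integral_sum) (rule intShx)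
  have F: "(\<integral>x. SH x \<partial>PX) \<le> (\<integral>x. 4 * K * SX x \<partial>PX)"
  proof (rule integral_mono[OF intSH])
    show "integrable PX (\<lambda>x. 4 * K * SX x)" by (rule integrable_mult_right[OF intSX])
    fix x show "SH x \<le> 4 * K * SX x"
      unfolding SH_def SX_def by (rule SH_le)
  qed
  have F2: "(\<integral>x. 4 * K * SX x \<partial>PX) = 4 * K * (\<integral>x. SX x \<partial>PX)"
    by (rule integral_mult_right_zero)
  have G: "(\<integral>s. Sx x s \<partial>PE) = SX x / 2 ^ n" for x
    using integral_PiM_rad[of "{..<n}" "\<lambda>s. Sx x s", OF _ Sx_meas1] by (simp add: SX_def)
  have H: "(\<integral>x. (\<integral>s. Sx x s \<partial>PE) \<partial>PX) = (\<integral>x. SX x \<partial>PX) / 2 ^ n"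
    unfolding G by (rule integral_divide_zero)
  have intP: "integrable (PX \<Otimes>\<^sub>M PE) (\<lambda>p. Sx (fst p) (snd p))"
  proof (rule PP.integrable_const_bound[where B=K])
    show "AE p in PX \<Otimes>\<^sub>M PE. norm (Sx (fst p) (snd p)) \<le> K"
      using AE_XE by eventually_elim (simp add: Sx_bound)
  qed measurable
  have I: "(\<integral>x. (\<integral>s. Sx x s \<partial>PE) \<partial>PX) = (\<integral>p. Sx (fst p) (snd p) \<partial>(PX \<Otimes>\<^sub>M PE))"
    using PP.integral_fst'[OF intP] by (simp only: fst_conv snd_conv)
  define T where "T = (\<integral>p. Sx (fst p) (snd p) \<partial>(PX \<Otimes>\<^sub>M PE))"
  define D where "D = (\<integral>x. Dx x \<partial>PX)"
  define Ph where "Ph = (\<integral>q. Phq q \<partial>QQ)"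
  have pos: "(0::real) < 2 ^ n" by simp
  have C2: "(\<Sum>s\<in>Sg {..<n}. 2 * (\<integral>x. Shx x s \<partial>PX)) = 2 * (\<integral>x. SH x \<partial>PX)"
    unfolding E by (rule sum_distrib_left[symmetric])
  have s1: "2 ^ n * Ph \<le> 2 * (\<integral>x. SH x \<partial>PX)" using B C C2 unfolding Ph_def by linarith
  have s2: "2 ^ n * D \<le> 2 ^ n * Ph" using A pos unfolding D_def Ph_def by simp
  have s3: "(\<integral>x. SH x \<partial>PX) \<le> 4 * K * (\<integral>x. SX x \<partial>PX)" using F F2 by linarith
  have s4: "(\<integral>x. SX x \<partial>PX) = 2 ^ n * T" using H I pos unfolding T_def by (simp add: field_simps)
  have s5: "(\<integral>x. SH x \<partial>PX) \<le> 4 * K * (2 ^ n * T)" using s3 s4 by simp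
  have s6: "2 * (4 * K * (2 ^ n * T)) = 2 ^ n * (8 * K * (T::real))" by (simp add: algebra_simps)
  have "2 ^ n * Ph \<le> 2 ^ n * (8 * K * T)" using s1 s5 s6 by linarith
  then have "Ph \<le> 8 * K * T" using pos by simp
  then have "D \<le> 8 * K * T" using A unfolding D_def Ph_def by simp
  then show ?thesis by (simp only: D_def T_def)
qed

end


lemma transfer_distr:
  fixes M :: "'a measure" and Qz :: "'x::euclidean_space measure"
    and z :: "nat \<Rightarrow> 'a \<Rightarrow> 'x" and eps :: "nat \<Rightarrow> 'a \<Rightarrow> real"
  assumes pM: "prob_space M" and npos: "0 < n" and Qs: "sets Qz = sets borel"
    and rv: "\<And>i. i < n \<Longrightarrow> (\<lambda>\<omega>. (z i \<omega>, eps i \<omega>)) \<in> borel_measurable M"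
    and indep: "prob_space.indep_vars M (\<lambda>_. borel) (\<lambda>i \<omega>. (z i \<omega>, eps i \<omega>)) {..<n}"
    and distr: "\<And>i. i < n \<Longrightarrow> distr M (Qz \<Otimes>\<^sub>M rademacher) (\<lambda>\<omega>. (z i \<omega>, eps i \<omega>)) = Qz \<Otimes>\<^sub>M rademacher"
  shows "distr M (PiM {..<n} (\<lambda>_. Qz \<Otimes>\<^sub>M rademacher)) (\<lambda>\<omega>. \<lambda>i\<in>{..<n}. (z i \<omega>, eps i \<omega>))
       = PiM {..<n} (\<lambda>_. Qz \<Otimes>\<^sub>M rademacher)"
proof -
  interpret prob_space M by (rule pM)
  have sb: "sets (Qz \<Otimes>\<^sub>M rademacher) = sets (borel :: ('x \<times> real) measure)"
  proof -
    have "sets (Qz \<Otimes>\<^sub>M rademacher) = sets ((borel :: 'x measure) \<Otimes>\<^sub>M (borel :: real measure))"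
      by (rule sets_pair_measure_cong) (simp_all add: Qs)
    also have "\<dots> = sets (borel :: ('x \<times> real) measure)" by (rule arg_cong[where f=sets, OF borel_prod])
    finally show ?thesis .
  qed
  have ne: "{..<n} \<noteq> {}" using npos by auto
  have D1: "distr M (PiM {..<n} (\<lambda>_. borel)) (\<lambda>\<omega>. \<lambda>i\<in>{..<n}. (z i \<omega>, eps i \<omega>))
      = PiM {..<n} (\<lambda>i. distr M borel (\<lambda>\<omega>. (z i \<omega>, eps i \<omega>)))"
    using indep_vars_iff_distr_eq_PiM'[OF ne, where M'="\<lambda>_. borel" and X="\<lambda>i \<omega>. (z i \<omega>, eps i \<omega>)"] rv indep by auto
  have D2: "distr M borel (\<lambda>\<omega>. (z i \<omega>, eps i \<omega>)) = Qz \<Otimes>\<^sub>M rademacher" if i: "i < n" for i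
  proof -
    have "distr M borel (\<lambda>\<omega>. (z i \<omega>, eps i \<omega>)) = distr M (Qz \<Otimes>\<^sub>M rademacher) (\<lambda>\<omega>. (z i \<omega>, eps i \<omega>))"
      by (rule distr_cong[OF refl sb[symmetric]]) simp
    then show ?thesis using distr[OF i] by simp
  qed
  have "PiM {..<n} (\<lambda>i. distr M borel (\<lambda>\<omega>. (z i \<omega>, eps i \<omega>))) = PiM {..<n} (\<lambda>_. Qz \<Otimes>\<^sub>M rademacher)"
    by (rule PiM_cong[OF refl]) (rule D2, simp)
  moreover have "distr M (PiM {..<n} (\<lambda>_. Qz \<Otimes>\<^sub>M rademacher)) (\<lambda>\<omega>. \<lambda>i\<in>{..<n}. (z i \<omega>, eps i \<omega>))
      = distr M (PiM {..<n} (\<lambda>_. borel)) (\<lambda>\<omega>. \<lambda>i\<in>{..<n}. (z i \<omega>, eps i \<omega>))"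
  proof (rule distr_cong[OF refl])
    show "sets (PiM {..<n} (\<lambda>_. Qz \<Otimes>\<^sub>M rademacher)) = sets (PiM {..<n} (\<lambda>_. borel))"
      by (rule sets_PiM_cong[OF refl]) (rule sb)
  qed simp
  ultimately show ?thesis using D1 by simp
qed


lemma (in sset) Sx_cong: "(\<And>i. i < n \<Longrightarrow> x i = x' i) \<Longrightarrow> (\<And>i. i < n \<Longrightarrow> s i = s' i) \<Longrightarrow> Sx x s = Sx x' s'"
proof -
  assume "\<And>i. i < n \<Longrightarrow> x i = x' i" "\<And>i. i < n \<Longrightarrow> s i = s' i"
  then have "(\<Sum>i<n. g (x i) * s i) = (\<Sum>i<n. g (x' i) * s' i)" for g by (intro sum.cong) auto
  then show ?thesis by (simp add: Sx_def)
qed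

lemma core:
  fixes M :: "'a measure" and Qz :: "'x::euclidean_space measure"
    and z :: "nat \<Rightarrow> 'a \<Rightarrow> 'x" and eps :: "nat \<Rightarrow> 'a \<Rightarrow> real"
  assumes pM: "prob_space M" and npos: "0 < n" and Qp: "prob_space Qz" and Qs: "sets Qz = sets borel"
    and rv: "\<And>i. i < n \<Longrightarrow> (\<lambda>\<omega>. (z i \<omega>, eps i \<omega>)) \<in> borel_measurable M"
    and indep: "prob_space.indep_vars M (\<lambda>_. borel) (\<lambda>i \<omega>. (z i \<omega>, eps i \<omega>)) {..<n}"
    and distr: "\<And>i. i < n \<Longrightarrow> distr M (Qz \<Otimes>\<^sub>M rademacher) (\<lambda>\<omega>. (z i \<omega>, eps i \<omega>)) = Qz \<Otimes>\<^sub>M rademacher"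
    and Kpos: "0 < K" and cG: "countable \<G>" and Gne: "\<G> \<noteq> {}"
    and meas: "\<And>g. g \<in> \<G> \<Longrightarrow> g \<in> borel_measurable borel"
    and supb: "\<And>g x. g \<in> \<G> \<Longrightarrow> \<bar>g x\<bar> \<le> K"
  shows "(\<integral>\<omega>. (SUP g\<in>\<G>. \<bar>empsq n (\<lambda>i. z i \<omega>) g - L2sq Qz g\<bar>) \<partial>M)
     \<le> 8 * K * (\<integral>\<omega>. (SUP g\<in>\<G>. \<bar>(1 / real n) * (\<Sum>i<n. g (z i \<omega>) * eps i \<omega>)\<bar>) \<partial>M)"
proof -
  interpret S: sset Qz \<G> n K by (rule sset.intro) (use assms in auto)
  interpret pM: prob_space M by (rule pM)
  interpret PEp: prob_space S.PE by (rule S.PE_prob)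
  interpret PXp: prob_space S.PX by (rule S.PX_prob)
  let ?P = "PiM {..<n} (\<lambda>_. Qz \<Otimes>\<^sub>M rademacher)"
  let ?Zv = "\<lambda>\<omega>. \<lambda>i\<in>{..<n}. (z i \<omega>, eps i \<omega>)"
  let ?zip = "\<lambda>p. \<lambda>i\<in>{..<n}. (fst p i, snd p i)"
  have sb: "sets (Qz \<Otimes>\<^sub>M rademacher) = sets (borel :: ('x \<times> real) measure)"
  proof -
    have "sets (Qz \<Otimes>\<^sub>M rademacher) = sets ((borel :: 'x measure) \<Otimes>\<^sub>M (borel :: real measure))"
      by (rule sets_pair_measure_cong) (simp_all add: Qs)
    also have "\<dots> = sets (borel :: ('x \<times> real) measure)" by (rule arg_cong[where f=sets, OF borel_prod])
    finally show ?thesis .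
  qed
  have Zm: "?Zv \<in> measurable M ?P"
  proof (rule measurable_restrict)
    fix i assume "i \<in> {..<n}"
    then show "(\<lambda>\<omega>. (z i \<omega>, eps i \<omega>)) \<in> measurable M (Qz \<Otimes>\<^sub>M rademacher)"
      using rv[of i] measurable_cong_sets[OF refl sb] by auto
  qed
  have zipm: "?zip \<in> measurable (S.PX \<Otimes>\<^sub>M S.PE) ?P"
    by (rule measurable_restrict) measurable
  have DZ: "distr M ?P ?Zv = ?P" by (rule transfer_distr) (use assms in auto)
  have DP: "distr (S.PX \<Otimes>\<^sub>M S.PE) ?P ?zip = ?P" by (rule PiM_zip) (auto intro: Qp rad_prob)
  have tr: "(\<integral>\<omega>. F (?Zv \<omega>) \<partial>M) = (\<integral>p. F (?zip p) \<partial>(S.PX \<Otimes>\<^sub>M S.PE))"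
    if Fm: "F \<in> borel_measurable ?P" for F :: "_ \<Rightarrow> real"
  proof -
    have "(\<integral>\<omega>. F (?Zv \<omega>) \<partial>M) = (\<integral>x. F x \<partial>distr M ?P ?Zv)" by (rule integral_distr[symmetric, OF Zm Fm])
    also have "\<dots> = (\<integral>x. F x \<partial>distr (S.PX \<Otimes>\<^sub>M S.PE) ?P ?zip)" by (simp only: DZ DP)
    also have "\<dots> = (\<integral>p. F (?zip p) \<partial>(S.PX \<Otimes>\<^sub>M S.PE))" by (rule integral_distr[OF zipm Fm])
    finally show ?thesis .
  qed
  have fstm[measurable]: "(\<lambda>\<omega>. \<lambda>i\<in>{..<n}. fst (\<omega> i)) \<in> measurable ?P S.PX"
    by (rule measurable_restrict) measurable
  have sndm[measurable]: "(\<lambda>\<omega>. \<lambda>i\<in>{..<n}. snd (\<omega> i)) \<in> measurable ?P S.PE"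
    by (rule measurable_restrict) measurable
  have F1m: "(\<lambda>\<omega>. S.Dx (\<lambda>i\<in>{..<n}. fst (\<omega> i))) \<in> borel_measurable ?P"
    by (rule S.Dx_meas[OF fstm])
  have F2m: "(\<lambda>\<omega>. S.Sx (\<lambda>i\<in>{..<n}. fst (\<omega> i)) (\<lambda>i\<in>{..<n}. snd (\<omega> i))) \<in> borel_measurable ?P"
    by (rule S.Sx_meas[OF fstm sndm])
  have L: "(\<integral>\<omega>. (SUP g\<in>\<G>. \<bar>empsq n (\<lambda>i. z i \<omega>) g - L2sq Qz g\<bar>) \<partial>M) = (\<integral>x. S.Dx x \<partial>S.PX)"
  proof -
    have "(\<integral>\<omega>. (SUP g\<in>\<G>. \<bar>empsq n (\<lambda>i. z i \<omega>) g - L2sq Qz g\<bar>) \<partial>M)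
        = (\<integral>\<omega>. S.Dx (\<lambda>i\<in>{..<n}. fst (?Zv \<omega> i)) \<partial>M)"
      by (intro Bochner_Integration.integral_cong refl) (auto simp: S.Dx_def[symmetric] intro!: S.Dx_cong)
    also have "\<dots> = (\<integral>p. S.Dx (\<lambda>i\<in>{..<n}. fst (?zip p i)) \<partial>(S.PX \<Otimes>\<^sub>M S.PE))"
      by (rule tr[OF F1m])
    also have "\<dots> = (\<integral>p. S.Dx (fst p) \<partial>(S.PX \<Otimes>\<^sub>M S.PE))"
      by (intro Bochner_Integration.integral_cong refl S.Dx_cong) auto
    also have "\<dots> = (\<integral>x. S.Dx x \<partial>distr (S.PX \<Otimes>\<^sub>M S.PE) S.PX fst)"
      by (rule integral_distr[symmetric]) measurable
    also have "\<dots> = (\<integral>x. S.Dx x \<partial>S.PX)" by (simp only: PEp.distr_pair_fst)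
    finally show ?thesis .
  qed
  have R: "(\<integral>\<omega>. (SUP g\<in>\<G>. \<bar>(1 / real n) * (\<Sum>i<n. g (z i \<omega>) * eps i \<omega>)\<bar>) \<partial>M)
     = (\<integral>p. S.Sx (fst p) (snd p) \<partial>(S.PX \<Otimes>\<^sub>M S.PE))"
  proof -
    have "(\<integral>\<omega>. (SUP g\<in>\<G>. \<bar>(1 / real n) * (\<Sum>i<n. g (z i \<omega>) * eps i \<omega>)\<bar>) \<partial>M)
        = (\<integral>\<omega>. S.Sx (\<lambda>i\<in>{..<n}. fst (?Zv \<omega> i)) (\<lambda>i\<in>{..<n}. snd (?Zv \<omega> i)) \<partial>M)"
    proof (intro Bochner_Integration.integral_cong refl)
      fix \<omega>
      have "(SUP g\<in>\<G>. \<bar>(1 / real n) * (\<Sum>i<n. g (z i \<omega>) * eps i \<omega>)\<bar>) = S.Sx (\<lambda>i. z i \<omega>) (\<lambda>i. eps i \<omega>)"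
        by (simp only: S.Sx_def)
      also have "\<dots> = S.Sx (\<lambda>i\<in>{..<n}. fst (?Zv \<omega> i)) (\<lambda>i\<in>{..<n}. snd (?Zv \<omega> i))"
        by (rule S.Sx_cong) auto
      finally show "(SUP g\<in>\<G>. \<bar>(1 / real n) * (\<Sum>i<n. g (z i \<omega>) * eps i \<omega>)\<bar>) = S.Sx (\<lambda>i\<in>{..<n}. fst (?Zv \<omega> i)) (\<lambda>i\<in>{..<n}. snd (?Zv \<omega> i))" .
    qed
    also have "\<dots> = (\<integral>p. S.Sx (\<lambda>i\<in>{..<n}. fst (?zip p i)) (\<lambda>i\<in>{..<n}. snd (?zip p i)) \<partial>(S.PX \<Otimes>\<^sub>M S.PE))"
      by (rule tr[OF F2m])
    also have "\<dots> = (\<integral>p. S.Sx (fst p) (snd p) \<partial>(S.PX \<Otimes>\<^sub>M S.PE))"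
      by (intro Bochner_Integration.integral_cong refl S.Sx_cong) auto
    finally show ?thesis .
  qed
  show ?thesis unfolding L R by (rule S.step_avg)
qed


lemma Ginv_facts:
  fixes G :: "real \<Rightarrow> real"
  assumes sm: "strict_mono_on {0..} G" and bij: "bij_betw G {0..} {0..}"
  shows Ginv_nonneg: "0 \<le> y \<Longrightarrow> 0 \<le> inv_into {0..} G y"
    and G_Ginv: "0 \<le> y \<Longrightarrow> G (inv_into {0..} G y) = y"
    and G_nonneg: "0 \<le> x \<Longrightarrow> 0 \<le> G x"
    and Ginv_ge: "0 \<le> x \<Longrightarrow> 0 \<le> y \<Longrightarrow> G x \<le> y \<Longrightarrow> x \<le> inv_into {0..} G y"
    and Ginv_mono: "0 \<le> a \<Longrightarrow> a \<le> b \<Longrightarrow> inv_into {0..} G a \<le> inv_into {0..} G b"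
proof -
  have img: "G ` {0..} = {0..}" using bij by (simp add: bij_betw_def)
  show nn: "0 \<le> inv_into {0..} G y" if "0 \<le> y" for y
    using that img by (metis atLeast_iff inv_into_into)
  show GG: "G (inv_into {0..} G y) = y" if "0 \<le> y" for y
    using that img by (metis atLeast_iff f_inv_into_f)
  show "0 \<le> x \<Longrightarrow> 0 \<le> G x" using img by auto
  show ge: "x \<le> inv_into {0..} G y" if "0 \<le> x" "0 \<le> y" "G x \<le> y" for x y
  proof (rule ccontr)
    assume "\<not> x \<le> inv_into {0..} G y"
    then have "inv_into {0..} G y < x" by simp
    then have "G (inv_into {0..} G y) < G x"
      using sm nn[OF that(2)] that(1) by (auto simp: strict_mono_on_def)
    then show False using GG[OF that(2)] that(3) by simp
  qed
  show "inv_into {0..} G a \<le> inv_into {0..} G b" if "0 \<le> a" "a \<le> b" for a b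
    using ge[of "inv_into {0..} G a" b] nn GG that by simp
qed

lemma convex_Gabs:
  fixes G :: "real \<Rightarrow> real"
  assumes sm: "strict_mono_on {0..} G" and sc: "strict_convex_on {0..} G"
  shows "convex_on UNIV (\<lambda>u. G \<bar>u\<bar>)"
proof (rule convex_onI)
  fix t x y :: real assume t: "0 < t" "t < 1"
  have mono: "G a \<le> G b" if "0 \<le> a" "a \<le> b" for a b
    using sm that by (cases "a = b") (auto simp: strict_mono_on_def less_imp_le)
  have "\<bar>(1 - t) *\<^sub>R x + t *\<^sub>R y\<bar> \<le> (1 - t) * \<bar>x\<bar> + t * \<bar>y\<bar>"
    using t by (simp add: abs_triangle_ineq[THEN order_trans] abs_mult)
  then have "G \<bar>(1 - t) *\<^sub>R x + t *\<^sub>R y\<bar> \<le> G ((1 - t) * \<bar>x\<bar> + t * \<bar>y\<bar>)"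
    by (intro mono) auto
  also have "\<dots> \<le> (1 - t) * G \<bar>x\<bar> + t * G \<bar>y\<bar>"
  proof (cases "\<bar>x\<bar> = \<bar>y\<bar>")
    case True then show ?thesis by (simp add: algebra_simps)
  next
    case False
    then show ?thesis using sc t unfolding strict_convex_on_def
      by (metis abs_ge_zero atLeast_iff less_imp_le)
  qed
  finally show "G \<bar>(1 - t) *\<^sub>R x + t *\<^sub>R y\<bar> \<le> (1 - t) * G \<bar>x\<bar> + t * G \<bar>y\<bar>" .
qed simp


theorem mainTheorem4:
  fixes M :: "'a measure"
    and Qz :: "'x::euclidean_space measure"
    and z :: "nat \<Rightarrow> 'a \<Rightarrow> 'x"
    and eps :: "nat \<Rightarrow> 'a \<Rightarrow> real"
    and n :: nat
    and R K :: real
    and \<G> :: "('x \<Rightarrow> real) set"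
    and G :: "real \<Rightarrow> real"
  assumes "prob_space M"
    and "0 < n"
    and "prob_space Qz" and "sets Qz = sets borel"
    and rv: "\<And>i. i < n \<Longrightarrow> (\<lambda>\<omega>. (z i \<omega>, eps i \<omega>)) \<in> borel_measurable M"
    and indep: "prob_space.indep_vars M (\<lambda>_. borel) (\<lambda>i \<omega>. (z i \<omega>, eps i \<omega>)) {..<n}"
    and distr: "\<And>i. i < n \<Longrightarrow> distr M (Qz \<Otimes>\<^sub>M rademacher) (\<lambda>\<omega>. (z i \<omega>, eps i \<omega>)) = Qz \<Otimes>\<^sub>M rademacher"
    and "0 < R" and "0 < K"
    and "countable \<G>" and "\<G> \<noteq> {}"
    and meas: "\<And>g. g \<in> \<G> \<Longrightarrow> g \<in> borel_measurable borel"
    and supb: "\<And>g x. g \<in> \<G> \<Longrightarrow> \<bar>g x\<bar> \<le> K"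
    and l2b: "\<And>g. g \<in> \<G> \<Longrightarrow> sqrt (L2sq Qz g) \<le> R"
    and "continuous_on {0..} G"
    and "strict_mono_on {0..} G"
    and "strict_convex_on {0..} G"
    and "bij_betw G {0..} {0..}"
    and hyp: "(\<integral>\<omega>. (SUP g\<in>\<G>. \<bar>(1 / real n) * (\<Sum>i<n. g (z i \<omega>) * eps i \<omega>)\<bar>) \<partial>M)
              \<le> (\<integral>\<omega>. inv_into {0..} G (SUP g\<in>\<G>. empsq n (\<lambda>i. z i \<omega>) g) \<partial>M) / sqrt (real n)"
    and Rbig: "ereal (R^2) \<ge> conj_fun G (16 * K / sqrt (real n)) / 2"
  shows "(\<integral>\<omega>. inv_into {0..} G (SUP g\<in>\<G>. empsq n (\<lambda>i. z i \<omega>) g) \<partial>M)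
           \<le> inv_into {0..} G (4 * R^2)
      \<and> (\<integral>\<omega>. (SUP g\<in>\<G>. \<bar>empsq n (\<lambda>i. z i \<omega>) g - L2sq Qz g\<bar>) \<partial>M)
           \<le> 8 * K * inv_into {0..} G (4 * R^2) / sqrt (real n)"
proof -
  note pM = assms(1) and npos = assms(2) and Qp = assms(3) and Qs = assms(4)
  note Rpos = assms(8) and Kpos = assms(9) and cG = assms(10) and Gne = assms(11)
  note sm = assms(16) and sc = assms(17) and bij = assms(18)
  interpret S: sset Qz \<G> n K by (rule sset.intro) (use assms in auto)
  interpret pM: prob_space M by (rule pM)
  let ?Ginv = "inv_into {0..} G"
  define Y where "Y \<omega> = (SUP g\<in>\<G>. empsq n (\<lambda>i. z i \<omega>) g)" for \<omega>
  define X where "X \<omega> = ?Ginv (Y \<omega>)" for \<omega>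
  define D where "D \<omega> = (SUP g\<in>\<G>. \<bar>empsq n (\<lambda>i. z i \<omega>) g - L2sq Qz g\<bar>)" for \<omega>
  define Sm where "Sm = (\<integral>\<omega>. (SUP g\<in>\<G>. \<bar>(1 / real n) * (\<Sum>i<n. g (z i \<omega>) * eps i \<omega>)\<bar>) \<partial>M)"
  have zm[measurable]: "(\<lambda>\<omega>. z i \<omega>) \<in> borel_measurable M" if "i < n" for i
  proof -
    have "(\<lambda>\<omega>. (z i \<omega>, eps i \<omega>)) \<in> measurable M (borel \<Otimes>\<^sub>M borel)"
      using rv[OF that] by (simp add: borel_prod)
    from measurable_compose[OF this measurable_fst] show ?thesis by simp
  qed
  have gm[measurable]: "g \<in> borel_measurable borel" if "g \<in> \<G>" for g using meas that by blast
  have em: "(\<lambda>\<omega>. empsq n (\<lambda>i. z i \<omega>) g) \<in> borel_measurable M" if g: "g \<in> \<G>" for g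
    unfolding empsq_def using g by measurable
  have Ybd: "0 \<le> Y \<omega> \<and> Y \<omega> \<le> K^2" for \<omega>
  proof -
    obtain g0 where g0: "g0 \<in> \<G>" using Gne by auto
    have "\<bar>Y \<omega>\<bar> \<le> K^2" unfolding Y_def
      by (rule sup_bound[where F="\<lambda>g \<omega>. empsq n (\<lambda>i. z i \<omega>) g"]) (use Gne S.empsq_bound in auto)
    moreover have "empsq n (\<lambda>i. z i \<omega>) g0 \<le> Y \<omega>" unfolding Y_def
      by (rule sup_upper2[where B="K^2", OF g0]) (use S.empsq_bound in auto)
    ultimately show ?thesis using S.empsq_bound[OF g0, of "\<lambda>i. z i \<omega>"] by (simp add: abs_le_iff)
  qed
  have Ym[measurable]: "Y \<in> borel_measurable M" unfolding Y_def
    by (rule sup_meas[where B="K^2"]) (use cG em S.empsq_bound in auto)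
  have phim: "(\<lambda>y. ?Ginv (max 0 y)) \<in> borel_measurable borel"
  proof (rule borel_measurable_mono)
    show "mono (\<lambda>y. ?Ginv (max 0 y))"
      by (rule monoI) (rule Ginv_mono[OF sm bij], auto)
  qed
  have XY: "X \<omega> = ?Ginv (max 0 (Y \<omega>))" for \<omega> using Ybd[of \<omega>] by (simp add: X_def)
  have Xm[measurable]: "X \<in> borel_measurable M"
    unfolding XY by (rule measurable_compose[OF Ym phim])
  have Xbd: "0 \<le> X \<omega> \<and> X \<omega> \<le> ?Ginv (K^2)" for \<omega>
    using Ybd[of \<omega>] by (auto simp: X_def intro: Ginv_nonneg[OF sm bij] Ginv_mono[OF sm bij])
  have intX: "integrable M X"
  proof (rule pM.integrable_bdd[where B="?Ginv (K^2)"])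
    show "X \<in> borel_measurable M" by (rule Xm)
    fix \<omega> show "\<bar>X \<omega>\<bar> \<le> ?Ginv (K^2)" using Xbd[of \<omega>] by simp
  qed
  have intY: "integrable M Y"
  proof (rule pM.integrable_bdd[where B="K^2"])
    show "Y \<in> borel_measurable M" by (rule Ym)
    fix \<omega> show "\<bar>Y \<omega>\<bar> \<le> K^2" using Ybd[of \<omega>] by simp
  qed
  have Dm[measurable]: "D \<in> borel_measurable M" unfolding D_def
    by (rule sup_meas[where B="K^2"]) (use cG em S.diffL_bound in auto)
  have intD: "integrable M D"
    by (rule pM.integrable_bdd[where B="K^2"]) (use S.diffL_bound Gne in \<open>auto simp: D_def intro!: sup_bound\<close>)
  define x0 where "x0 = (\<integral>\<omega>. X \<omega> \<partial>M)"
  define Dm where "Dm = (\<integral>\<omega>. D \<omega> \<partial>M)"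
  have x0nn: "0 \<le> x0" unfolding x0_def using Xbd by (simp add: integral_nonneg)
  have core': "Dm \<le> 8 * K * Sm"
    unfolding Dm_def D_def Sm_def by (rule core) (use assms in auto)
  have hyp': "Sm \<le> x0 / sqrt (real n)"
    using hyp unfolding Sm_def x0_def X_def Y_def .
  have L2R: "L2sq Qz g \<le> R^2" if g: "g \<in> \<G>" for g
  proof -
    have nn: "0 \<le> L2sq Qz g" using S.L2sq_bound[OF g] by simp
    then have "L2sq Qz g = (sqrt (L2sq Qz g))^2" by simp
    also have "\<dots> \<le> R^2" using l2b[OF g] nn by (intro power_mono) auto
    finally show ?thesis .
  qed
  have YD: "Y \<omega> \<le> R^2 + D \<omega>" for \<omega>
    unfolding Y_def
  proof (rule cSUP_least[OF Gne])
    fix g assume g: "g \<in> \<G>"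
    have "\<bar>empsq n (\<lambda>i. z i \<omega>) g - L2sq Qz g\<bar> \<le> D \<omega>" unfolding D_def
      by (rule sup_upper2[where B="K^2", OF g]) (use S.diffL_bound in auto)
    then show "empsq n (\<lambda>i. z i \<omega>) g \<le> R^2 + D \<omega>" using L2R[OF g] by linarith
  qed
  have EY: "(\<integral>\<omega>. Y \<omega> \<partial>M) \<le> R^2 + Dm"
  proof -
    have "(\<integral>\<omega>. Y \<omega> \<partial>M) \<le> (\<integral>\<omega>. R^2 + D \<omega> \<partial>M)"
      by (rule integral_mono[OF intY]) (use intD YD in auto)
    also have "\<dots> = R^2 + Dm" using intD by (simp add: Dm_def pM.prob_space)
    finally show ?thesis .
  qed
  have GX: "G \<bar>X \<omega>\<bar> = Y \<omega>" for \<omega>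
    using Xbd[of \<omega>] Ybd[of \<omega>] G_Ginv[OF sm bij] by (simp add: X_def)
  have jensen: "G \<bar>x0\<bar> \<le> (\<integral>\<omega>. G \<bar>X \<omega>\<bar> \<partial>M)"
    unfolding x0_def
    by (rule pM.jensens_inequality[where I=UNIV]) (use intX intY GX convex_Gabs[OF sm sc] in auto)
  have G1: "G x0 \<le> R^2 + 8 * K * x0 / sqrt (real n)"
  proof -
    have "G x0 \<le> (\<integral>\<omega>. Y \<omega> \<partial>M)" using jensen x0nn GX by simp
    also have "\<dots> \<le> R^2 + Dm" by (rule EY)
    also have "Dm \<le> 8 * K * (x0 / sqrt (real n))"
      using core' hyp' Kpos by (meson mult_left_mono order_trans less_eq_real_def mult_pos_pos zero_less_numeral)
    finally show ?thesis by simp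
  qed
  define v where "v = 16 * K / sqrt (real n)"
  have H1: "ereal (v * x0 - G x0) \<le> conj_fun G v"
    unfolding conj_fun_def using x0nn by (intro SUP_upper) auto
  have H2: "v * x0 - G x0 \<le> 2 * R^2"
  proof (cases "conj_fun G v")
    case (real c)
    have "ereal (c / 2) \<le> ereal (R^2)" using Rbig real by (simp add: v_def)
    then show ?thesis using H1 real by simp
  next
    case PInf
    then show ?thesis using Rbig by (simp add: v_def)
  next
    case MInf
    then show ?thesis using H1 by simp
  qed
  have vx: "8 * K * x0 / sqrt (real n) = v * x0 / 2" by (simp add: v_def)
  have G4: "G x0 \<le> 4 * R^2" using G1 H2 vx by linarith
  have x0le: "x0 \<le> ?Ginv (4 * R^2)"
    by (rule Ginv_ge[OF sm bij x0nn _ G4]) simp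
  have part1: "(\<integral>\<omega>. inv_into {0..} G (SUP g\<in>\<G>. empsq n (\<lambda>i. z i \<omega>) g) \<partial>M) \<le> inv_into {0..} G (4 * R^2)"
    using x0le unfolding x0_def X_def Y_def .
  have "Dm \<le> 8 * K * (x0 / sqrt (real n))"
    using core' hyp' Kpos by (meson mult_left_mono order_trans less_eq_real_def mult_pos_pos zero_less_numeral)
  also have "\<dots> \<le> 8 * K * (?Ginv (4 * R^2) / sqrt (real n))"
    using x0le Kpos npos by (intro mult_left_mono divide_right_mono) auto
  finally have part2: "Dm \<le> 8 * K * inv_into {0..} G (4 * R^2) / sqrt (real n)" by simp
  show ?thesis using part1 part2 unfolding Dm_def D_def by simp
qed


end
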